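(* Let $A$ be a self-adjoint operator in a separable Hilbert space $\mathfrak H$, let $U=(A+iI)(A-iI)^{-1}$ be its Cayley transform, and let $\mathcal L\neq\{0\}$ be a closed subspace of $\mathfrak H$. Let $$S_{\mathcal L}=A\upharpoonright_{\mathcal D(S_{\mathcal L})},\qquad \mathcal D(S_{\mathcal L})=\{u\in\mathcal D(A):((A-iI)u,\gamma)=0\ \ \forall\gamma\in\mathcal L\}.$$ Then the following are equivalent: (i) $S_{\mathcal L}$ is a Phillips symmetric operator (in particular, densely defined); (ii) $\mathcal L$ is a wandering subspace of $U$, i.e. $U^n\mathcal L\perp\mathcal L$ for all $n\in\mathbb N$.
   Context: A closed densely defined symmetric operator $S$ with equal nonzero defect numbers is a Phillips symmetric operator (PSO) if its characteristic function is constant on $\mathbb C_+$; here, given a boundary triplet $(\mathcal H,\Gamma_-,\Gamma_+)$ of $S^*$ (i.e. $\Gamma_\pm:\mathcal D(S^* )\to\mathcal H$ linear, $(S^*f,g)-(f,S^*g)=i[(\Gamma_+f,\Gamma_+g)-(\Gamma_-f,\Gamma_-g)]$, $(\Gamma_-,\Gamma_+)$ surjective onto $\mathcal H\oplus\mathcal H$), the characteristic function $\Theta(\lambda)$, $\lambda\in\mathbb C_+$, is the bounded operator in $\mathcal H$ with $\mathcal D(S)\dotplus\ker(S^*-\lambda I)=\{f\in\mathcal D(S^* ):\Theta(\lambda)\Gamma_+f=\Gamma_-f\}$. Equivalently (and usable as the definition here), $S$ is a PSO iff $\ker(S^*-\lambda I)\perp\ker(S^*-\nu I)$ for all $\lambda\in\mathbb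 C_+,\nu\in\mathbb C_-$. *)

theory Defs
  imports "HOL-Analysis.Analysis" "HOL-Library.Equipollence"
begin

text \<open>A complex inner product space, presented as a real inner product space
  (which supplies norm, metric and topology, so that closure, closedness and
  completeness are the library notions) together with a complex scalar
  multiplication and a complex inner product, linear in the first argument and
  conjugate-linear in the second, whose real part is the real inner product.\<close>

class complex_inner_space = real_inner +
  fixes scaleC :: "complex \<Rightarrow> 'a \<Rightarrow> 'a" (infixr \<open>*\<^sub>C\<close> 75)
    and cinner :: "'a \<Rightarrow> 'a \<Rightarrow> complex"
  assumes scaleC_add_right: "a *\<^sub>C (x + y) = a *\<^sub>C x + a *\<^sub>C y"
    and scaleC_add_left: "(a + b) *\<^sub>C x = a *\<^sub>C x + b *\<^sub>C x"
    and scaleC_scaleC: "a *\<^sub>C (b *\<^sub>C x) = (a * b) *\<^sub>C x"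
    and scaleC_one: "1 *\<^sub>C x = x"
    and scaleR_scaleC: "scaleR r x = complex_of_real r *\<^sub>C x"
    and cinner_commute: "cinner y x = cnj (cinner x y)"
    and cinner_add_left: "cinner (x + y) z = cinner x z + cinner y z"
    and cinner_scaleC_left: "cinner (a *\<^sub>C x) y = a * cinner x y"
    and inner_Re_cinner: "inner x y = Re (cinner x y)"

definition separable_type :: "'a::topological_space itself \<Rightarrow> bool" where
  "separable_type _ \<longleftrightarrow> (\<exists>D::'a set. countable D \<and> closure D = UNIV)"

definition csubspace :: "'a::complex_inner_space set \<Rightarrow> bool" where
  "csubspace M \<longleftrightarrow> 0 \<in> M \<and> (\<forall>x\<in>M. \<forall>y\<in>M. x + y \<in> M) \<and> (\<forall>c. \<forall>x\<in>M. c *\<^sub>C x \<in> M)"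

definition cspan :: "'a::complex_inner_space set \<Rightarrow> 'a set" where
  "cspan B = \<Inter>{M. csubspace M \<and> B \<subseteq> M}"

definition closed_csubspace :: "'a::complex_inner_space set \<Rightarrow> bool" where
  "closed_csubspace M \<longleftrightarrow> csubspace M \<and> closed M"

definition is_onb :: "'a::complex_inner_space set \<Rightarrow> 'a set \<Rightarrow> bool" where
  "is_onb B N \<longleftrightarrow> B \<subseteq> N \<and> (\<forall>x\<in>B. cinner x x = 1)
     \<and> (\<forall>x\<in>B. \<forall>y\<in>B. x \<noteq> y \<longrightarrow> cinner x y = 0) \<and> closure (cspan B) = N"

text \<open>A (possibly unbounded) linear operator is a pair (D, T): the domain D and a
  function T whose values outside D are irrelevant.\<close>

definition clinear_op :: "'a::complex_inner_space set \<Rightarrow> ('a \<Rightarrow> 'a) \<Rightarrow> bool" where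
  "clinear_op D T \<longleftrightarrow> csubspace D \<and> (\<forall>x\<in>D. \<forall>y\<in>D. T (x + y) = T x + T y)
     \<and> (\<forall>c. \<forall>x\<in>D. T (c *\<^sub>C x) = c *\<^sub>C T x)"

definition densely_defined :: "'a::complex_inner_space set \<Rightarrow> bool" where
  "densely_defined D \<longleftrightarrow> closure D = UNIV"

definition closed_op :: "'a::complex_inner_space set \<Rightarrow> ('a \<Rightarrow> 'a) \<Rightarrow> bool" where
  "closed_op D T \<longleftrightarrow> closed {(u, T u) | u. u \<in> D}"

definition symmetric_op :: "'a::complex_inner_space set \<Rightarrow> ('a \<Rightarrow> 'a) \<Rightarrow> bool" where
  "symmetric_op D T \<longleftrightarrow> clinear_op D T \<and> densely_defined D
     \<and> (\<forall>u\<in>D. \<forall>v\<in>D. cinner (T u) v = cinner u (T v))"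

text \<open>Self-adjoint: densely defined linear operator whose adjoint (as a graph) equals it:
  v \<in> D(T*) with T* v = w iff (T u, v) = (u, w) for all u \<in> D.\<close>
definition selfadjoint_op :: "'a::complex_inner_space set \<Rightarrow> ('a \<Rightarrow> 'a) \<Rightarrow> bool" where
  "selfadjoint_op D T \<longleftrightarrow> clinear_op D T \<and> densely_defined D
     \<and> (\<forall>v w. (\<forall>u\<in>D. cinner (T u) v = cinner u w) \<longleftrightarrow> (v \<in> D \<and> w = T v))"

text \<open>ker(T* - \<lambda> I) = {v \<in> D(T*). T* v = \<lambda> v}.\<close>
definition defect_space :: "'a::complex_inner_space set \<Rightarrow> ('a \<Rightarrow> 'a) \<Rightarrow> complex \<Rightarrow> 'a set" where
  "defect_space D T z = {v. \<forall>u\<in>D. cinner (T u) v = cinner u (z *\<^sub>C v)}"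

text \<open>Phillips symmetric operator: closed densely defined symmetric operator with equal
  nonzero defect numbers (Hilbert dimensions of ker(T* - iI), ker(T* + iI)), such that
  ker(T* - \<lambda> I) is orthogonal to ker(T* - \<nu> I) for all \<lambda> in C+, \<nu> in C-.\<close>
definition phillips_symmetric :: "'a::complex_inner_space set \<Rightarrow> ('a \<Rightarrow> 'a) \<Rightarrow> bool" where
  "phillips_symmetric D T \<longleftrightarrow> symmetric_op D T \<and> closed_op D T
     \<and> defect_space D T \<i> \<noteq> {0}
     \<and> (\<exists>B1 B2. is_onb B1 (defect_space D T \<i>) \<and> is_onb B2 (defect_space D T (- \<i>)) \<and> B1 \<approx> B2)
     \<and> (\<forall>z w. Im z > 0 \<longrightarrow> Im w < 0 \<longrightarrow>
          (\<forall>x\<in>defect_space D T z. \<forall>y\<in>defect_space D T w. cinner x y = 0))"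

text \<open>Cayley transform U = (A + iI)(A - iI)^{-1}.\<close>
definition cayley :: "'a::complex_inner_space set \<Rightarrow> ('a \<Rightarrow> 'a) \<Rightarrow> 'a \<Rightarrow> 'a" where
  "cayley D T f = (let x = (THE x. x \<in> D \<and> T x - \<i> *\<^sub>C x = f) in T x + \<i> *\<^sub>C x)"

definition SL_dom :: "'a::complex_inner_space set \<Rightarrow> ('a \<Rightarrow> 'a) \<Rightarrow> 'a set \<Rightarrow> 'a set" where
  "SL_dom D T L = {u \<in> D. \<forall>\<gamma>\<in>L. cinner (T u - \<i> *\<^sub>C u) \<gamma> = 0}"

definition wandering :: "('a::complex_inner_space \<Rightarrow> 'a) \<Rightarrow> 'a set \<Rightarrow> bool" where
  "wandering U L \<longleftrightarrow> (\<forall>n::nat. n \<ge> 1 \<longrightarrow> (\<forall>x\<in>L. \<forall>y\<in>L. cinner ((U ^^ n) x) y = 0))"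

end

theory Submission
  imports Defs
begin


lemma scaleC_real: "complex_of_real r *\<^sub>C (x::'a::complex_inner_space) = r *\<^sub>R x"
  by (simp add: scaleR_scaleC)

lemma scaleC_zero_left[simp]: "0 *\<^sub>C (x::'a::complex_inner_space) = 0"
  using scaleR_scaleC[of 0 x, symmetric] by (simp only: of_real_0 scaleR_zero_left)

lemma scaleC_minus1: "(-1) *\<^sub>C (x::'a::complex_inner_space) = - x"
  using scaleR_scaleC[of "-1" x, symmetric] by (simp only: of_real_minus of_real_1 scaleR_minus1_left)

lemma scaleC_zero_right[simp]: "c *\<^sub>C (0::'a::complex_inner_space) = 0"
  using scaleC_add_right[of c 0 0] by (simp only: add_0_right add_cancel_right_right)

lemma scaleC_minus_right: "c *\<^sub>C (- x::'a::complex_inner_space) = - (c *\<^sub>C x)"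
proof -
  have "c *\<^sub>C (- x) = c *\<^sub>C ((-1) *\<^sub>C x)" by (simp only: scaleC_minus1)
  also have "\<dots> = (-1) *\<^sub>C (c *\<^sub>C x)" by (simp only: scaleC_scaleC mult.commute)
  also have "\<dots> = - (c *\<^sub>C x)" by (simp only: scaleC_minus1)
  finally show ?thesis .
qed

lemma scaleC_minus_left: "(- c) *\<^sub>C (x::'a::complex_inner_space) = - (c *\<^sub>C x)"
proof -
  have "(- c) *\<^sub>C x = ((-1) * c) *\<^sub>C x" by simp
  also have "\<dots> = (-1) *\<^sub>C (c *\<^sub>C x)" by (simp only: scaleC_scaleC)
  also have "\<dots> = - (c *\<^sub>C x)" by (simp only: scaleC_minus1)
  finally show ?thesis .
qed

lemma scaleC_diff_right: "c *\<^sub>C (x - y::'a::complex_inner_space) = c *\<^sub>C x - c *\<^sub>C y"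
  by (simp only: diff_conv_add_uminus scaleC_add_right scaleC_minus_right)

lemma scaleC_diff_left: "(a - b) *\<^sub>C (x::'a::complex_inner_space) = a *\<^sub>C x - b *\<^sub>C x"
  by (simp only: diff_conv_add_uminus scaleC_add_left scaleC_minus_left)

lemma cinner_add_right: "cinner (x::'a::complex_inner_space) (y + z) = cinner x y + cinner x z"
proof -
  have "cinner x (y + z) = cnj (cinner (y + z) x)" by (rule cinner_commute)
  also have "\<dots> = cnj (cinner y x) + cnj (cinner z x)" by (simp only: cinner_add_left complex_cnj_add)
  also have "\<dots> = cinner x y + cinner x z" by (simp only: cinner_commute[of x y, symmetric] cinner_commute[of x z, symmetric])
  finally show ?thesis .
qed

lemma cinner_scaleC_right: "cinner (x::'a::complex_inner_space) (c *\<^sub>C y) = cnj c * cinner x y"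
proof -
  have "cinner x (c *\<^sub>C y) = cnj (cinner (c *\<^sub>C y) x)" by (rule cinner_commute)
  also have "\<dots> = cnj c * cnj (cinner y x)" by (simp only: cinner_scaleC_left complex_cnj_mult)
  also have "\<dots> = cnj c * cinner x y" by (simp only: cinner_commute[of x y, symmetric])
  finally show ?thesis .
qed

lemma cinner_zero_left[simp]: "cinner 0 (x::'a::complex_inner_space) = 0"
  using cinner_add_left[of 0 0 x] by (simp only: add_0_right add_cancel_right_right)

lemma cinner_zero_right[simp]: "cinner (x::'a::complex_inner_space) 0 = 0"
  using cinner_add_right[of x 0 0] by (simp only: add_0_right add_cancel_right_right)

lemma cinner_minus_left: "cinner (- x) (y::'a::complex_inner_space) = - cinner x y"
  using cinner_scaleC_left[of "-1" x y] by (simp only: scaleC_minus1) simp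

lemma cinner_minus_right: "cinner (x::'a::complex_inner_space) (- y) = - cinner x y"
  using cinner_scaleC_right[of x "-1" y] by (simp only: scaleC_minus1) simp

lemma cinner_diff_left: "cinner (x - y) (z::'a::complex_inner_space) = cinner x z - cinner y z"
  by (simp only: diff_conv_add_uminus cinner_add_left cinner_minus_left)

lemma cinner_diff_right: "cinner (x::'a::complex_inner_space) (y - z) = cinner x y - cinner x z"
  by (simp only: diff_conv_add_uminus cinner_add_right cinner_minus_right)

lemmas cinner_simps = cinner_add_left cinner_add_right cinner_diff_left cinner_diff_right
  cinner_scaleC_left cinner_scaleC_right cinner_minus_left cinner_minus_right

lemma cinner_self_real: "cinner (x::'a::complex_inner_space) x = complex_of_real ((norm x)^2)"
proof -
  have "cnj (cinner x x) = cinner x x" by (rule cinner_commute[symmetric])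
  then have "Im (cnj (cinner x x)) = Im (cinner x x)" by simp
  then have "Im (cinner x x) = 0" by simp
  moreover have "Re (cinner x x) = (norm x)^2" by (simp add: power2_norm_eq_inner inner_Re_cinner)
  ultimately show ?thesis by (simp add: complex_eq_iff)
qed

lemma cinner_self_eq_0[simp]: "cinner (x::'a::complex_inner_space) x = 0 \<longleftrightarrow> x = 0"
  by (simp add: cinner_self_real)

lemma norm_sq_cinner: "(norm (x::'a::complex_inner_space))^2 = Re (cinner x x)"
  by (simp add: cinner_self_real)

lemma norm_scaleC: "norm (c *\<^sub>C (x::'a::complex_inner_space)) = cmod c * norm x"
proof -
  have "cinner (c *\<^sub>C x) (c *\<^sub>C x) = (c * cnj c) * cinner x x"
    by (simp add: cinner_simps mult.assoc)
  then have "(norm (c *\<^sub>C x))^2 = Re (c * cnj c * cinner x x)"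
    by (simp add: norm_sq_cinner)
  also have "\<dots> = (cmod c)^2 * (norm x)^2"
    by (simp add: cinner_self_real complex_mult_cnj cmod_power2)
  finally have "(norm (c *\<^sub>C x))^2 = (cmod c * norm x)^2" by (simp add: power_mult_distrib)
  then show ?thesis by (simp add: power2_eq_iff_nonneg)
qed

lemma cinner_cauchy_schwarz: "cmod (cinner (x::'a::complex_inner_space) y) \<le> norm x * norm y"
proof (cases "cinner x y = 0")
  case True then show ?thesis by simp
next
  case False
  define c where "c = cinner x y"
  define t where "t = cnj c / complex_of_real (cmod c)"
  have ct: "cmod t = 1" using False by (simp add: t_def c_def norm_divide)
  have "cinner (t *\<^sub>C x) y = complex_of_real (cmod c)"
    using False by (simp add: t_def c_def cinner_scaleC_left complex_norm_square[symmetric] power2_eq_square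
        field_simps complex_mult_cnj)
  then have "cmod c = inner (t *\<^sub>C x) y" by (simp add: inner_Re_cinner)
  also have "\<dots> \<le> norm (t *\<^sub>C x) * norm y" by (rule norm_cauchy_schwarz)
  also have "\<dots> = norm x * norm y" by (simp add: norm_scaleC ct)
  finally show ?thesis by (simp add: c_def)
qed

lemma bounded_linear_scaleC: "bounded_linear (\<lambda>x::'a::complex_inner_space. c *\<^sub>C x)"
proof (rule bounded_linear_intro[where K="cmod c"])
  show "\<And>x y. c *\<^sub>C (x + y) = c *\<^sub>C x + c *\<^sub>C y" by (rule scaleC_add_right)
  show "\<And>r x. c *\<^sub>C (r *\<^sub>R x) = r *\<^sub>R (c *\<^sub>C x)"
    by (simp only: scaleR_scaleC scaleC_scaleC mult.commute)
  show "\<And>x. norm (c *\<^sub>C x) \<le> norm x * cmod c"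
    by (simp add: norm_scaleC)
qed

lemma bounded_linear_cinner_left: "bounded_linear (\<lambda>x::'a::complex_inner_space. cinner x y)"
proof (rule bounded_linear_intro[where K="norm y"])
  show "\<And>x z. cinner (x + z) y = cinner x y + cinner z y" by (rule cinner_add_left)
  show "\<And>r x. cinner (r *\<^sub>R x) y = r *\<^sub>R cinner x y"
    by (simp add: scaleR_scaleC cinner_scaleC_left scaleR_conv_of_real)
  show "\<And>x. norm (cinner x y) \<le> norm x * norm y"
    by (simp add: cinner_cauchy_schwarz)
qed

lemma tendsto_cinner_left: "X \<longlonglongrightarrow> x \<Longrightarrow> (\<lambda>n. cinner (X n) (y::'a::complex_inner_space)) \<longlonglongrightarrow> cinner x y"
  by (rule bounded_linear.tendsto[OF bounded_linear_cinner_left])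

lemma tendsto_cinner_right: "X \<longlonglongrightarrow> x \<Longrightarrow> (\<lambda>n. cinner (y::'a::complex_inner_space) (X n)) \<longlonglongrightarrow> cinner y x"
proof -
  assume "X \<longlonglongrightarrow> x"
  then have "(\<lambda>n. cnj (cinner (X n) y)) \<longlonglongrightarrow> cnj (cinner x y)"
    by (intro tendsto_cnj tendsto_cinner_left)
  moreover have "\<And>n. cinner y (X n) = cnj (cinner (X n) y)" by (rule cinner_commute)
  moreover have "cinner y x = cnj (cinner x y)" by (rule cinner_commute)
  ultimately show ?thesis by simp
qed

lemma tendsto_scaleC: "X \<longlonglongrightarrow> x \<Longrightarrow> (\<lambda>n. c *\<^sub>C (X n::'a::complex_inner_space)) \<longlonglongrightarrow> c *\<^sub>C x"
  by (rule bounded_linear.tendsto[OF bounded_linear_scaleC])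

lemma parallelogram_mid:
  fixes x a b :: "'a::real_inner"
  shows "(norm (a - b))^2 = 2 * (norm (x - a))^2 + 2 * (norm (x - b))^2 - 4 * (norm (x - (1/2) *\<^sub>R (a + b)))^2"
  by (simp add: power2_norm_eq_inner inner_simps inner_commute algebra_simps)

lemma proj_real:
  fixes M :: "'a::{real_inner, complete_space} set"
  assumes cl: "closed M" and z: "0 \<in> M" and ad: "\<And>a b. a \<in> M \<Longrightarrow> b \<in> M \<Longrightarrow> a + b \<in> M"
    and sc: "\<And>r a. a \<in> M \<Longrightarrow> r *\<^sub>R a \<in> M"
  shows "\<exists>m\<in>M. \<forall>y\<in>M. inner (x - m) y = 0"
proof -
  define S where "S = (\<lambda>y. (norm (x - y))^2) ` M"
  define d where "d = Inf S"
  have Sne: "S \<noteq> {}" using z by (auto simp: S_def)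
  have bdd: "bdd_below S" by (auto simp: S_def bdd_below_def intro!: exI[of _ 0])
  have low: "d \<le> (norm (x - y))^2" if "y \<in> M" for y
    unfolding d_def using that bdd by (auto simp: S_def intro!: cInf_lower)
  have "\<exists>y\<in>M. (norm (x - y))^2 < d + inverse (real (Suc n))" for n
  proof -
    have "Inf S < d + inverse (real (Suc n))" by (simp add: d_def)
    from cInf_lessD[OF Sne this] show ?thesis by (auto simp: S_def)
  qed
  then obtain m where mM: "\<And>n. m n \<in> M" and mb: "\<And>n. (norm (x - m n))^2 < d + inverse (real (Suc n))"
    by metis
  have mid: "(1/2) *\<^sub>R (m i + m j) \<in> M" for i j using mM ad sc by blast
  have Cd: "(norm (m i - m j))^2 \<le> 2 * inverse (real (Suc i)) + 2 * inverse (real (Suc j))" for i j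
  proof -
    have "(norm (m i - m j))^2 = 2 * (norm (x - m i))^2 + 2 * (norm (x - m j))^2 - 4 * (norm (x - (1/2) *\<^sub>R (m i + m j)))^2"
      by (rule parallelogram_mid)
    moreover have "d \<le> (norm (x - (1/2) *\<^sub>R (m i + m j)))^2" using low mid by blast
    ultimately show ?thesis using mb[of i] mb[of j] by linarith
  qed
  have "Cauchy m"
  proof (rule CauchyI)
    fix e :: real assume e: "0 < e"
    obtain N where N: "inverse (real (Suc N)) < e^2 / 4"
      using reals_Archimedean[of "e^2/4"] e by auto
    show "\<exists>M. \<forall>i\<ge>M. \<forall>j\<ge>M. norm (m i - m j) < e"
    proof (intro exI allI impI)
      fix i j assume ij: "N \<le> i" "N \<le> j"
      have "inverse (real (Suc i)) \<le> inverse (real (Suc N))" using ij by (simp add: le_imp_inverse_le)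
      moreover have "inverse (real (Suc j)) \<le> inverse (real (Suc N))" using ij by (simp add: le_imp_inverse_le)
      ultimately have "(norm (m i - m j))^2 < e^2" using Cd[of i j] N by linarith
      then show "norm (m i - m j) < e" using e by (simp add: power_less_imp_less_base)
    qed
  qed
  then obtain p where mp: "m \<longlonglongrightarrow> p" using Cauchy_convergent_iff convergent_def by blast
  have pM: "p \<in> M" using cl mM mp closed_sequential_limits by blast
  have T1: "(\<lambda>n. (norm (x - m n))^2) \<longlonglongrightarrow> (norm (x - p))^2"
    by (intro tendsto_intros mp)
  have T2: "(\<lambda>n. d + inverse (real (Suc n))) \<longlonglongrightarrow> d + 0"
    by (intro tendsto_intros LIMSEQ_inverse_real_of_nat)
  have "(norm (x - p))^2 \<le> d + 0"
    by (rule LIMSEQ_le[OF T1 T2]) (use mb less_imp_le in auto)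
  then have pd: "(norm (x - p))^2 \<le> d" by simp
  show ?thesis
  proof (intro bexI[OF _ pM] ballI)
    fix y assume yM: "y \<in> M"
    define a where "a = inner (x - p) y"
    define b where "b = (norm y)^2"
    have b0: "0 \<le> b" by (simp add: b_def)
    have key: "0 \<le> - 2 * t * a + t^2 * b" for t
    proof -
      have "p + t *\<^sub>R y \<in> M" using yM pM ad sc by blast
      then have "d \<le> (norm (x - (p + t *\<^sub>R y)))^2" by (rule low)
      also have "\<dots> = inner ((x - p) - t *\<^sub>R y) ((x - p) - t *\<^sub>R y)"
        by (simp only: power2_norm_eq_inner) (simp add: algebra_simps)
      also have "\<dots> = inner (x - p) (x - p) - 2 * t * a + t^2 * inner y y"
        by (simp add: a_def inner_diff_left inner_diff_right inner_commute power2_eq_square algebra_simps)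
      also have "\<dots> = (norm (x - p))^2 - 2 * t * a + t^2 * b"
        by (simp only: b_def power2_norm_eq_inner)
      finally show ?thesis using pd by linarith
    qed
    define t where "t = a/(b+1)"
    have q: "t^2 * b = (t*a) * (b/(b+1))" using b0 by (simp add: t_def power2_eq_square field_simps)
    have ta: "t*a = a^2/(b+1)" by (simp add: t_def power2_eq_square)
    have ta0: "0 \<le> t*a" using ta b0 by simp
    have "b/(b+1) \<le> 1" using b0 by simp
    then have "(t*a)*(b/(b+1)) \<le> t*a" using ta0 by (metis mult_left_le)
    with key[of t] q have "t*a \<le> 0" by linarith
    then have "a^2 \<le> 0" using ta b0 by (simp add: divide_le_0_iff)
    then show "inner (x - p) y = 0" by (simp add: a_def)
  qed
qed

lemma csubspace_real:
  assumes "csubspace M"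
  shows "0 \<in> M" "\<And>a b. a \<in> M \<Longrightarrow> b \<in> M \<Longrightarrow> a + b \<in> M" "\<And>r a. a \<in> M \<Longrightarrow> r *\<^sub>R a \<in> M"
    "\<And>c a. a \<in> M \<Longrightarrow> c *\<^sub>C a \<in> M"
  using assms by (auto simp: csubspace_def scaleR_scaleC)

lemma proj:
  fixes M :: "'a::{complex_inner_space, complete_space} set"
  assumes "closed_csubspace M"
  shows "\<exists>m\<in>M. \<forall>y\<in>M. cinner (x - m) y = 0"
proof -
  have cs: "csubspace M" and cl: "closed M" using assms by (auto simp: closed_csubspace_def)
  obtain m where mM: "m \<in> M" and o: "\<forall>y\<in>M. inner (x - m) y = 0"
    using proj_real[OF cl csubspace_real(1-3)[OF cs]] by blast
  show ?thesis
  proof (intro bexI[OF _ mM] ballI)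
    fix y assume y: "y \<in> M"
    have "Re (cinner (x - m) y) = 0" using o y by (simp add: inner_Re_cinner)
    moreover have "\<i> *\<^sub>C y \<in> M" using csubspace_real(4)[OF cs y] .
    then have "Re (cinner (x - m) (\<i> *\<^sub>C y)) = 0" using o by (simp add: inner_Re_cinner)
    then have "Im (cinner (x - m) y) = 0" by (simp add: cinner_scaleC_right)
    ultimately show "cinner (x - m) y = 0" by (simp add: complex_eq_iff)
  qed
qed

lemma perp_perp:
  fixes L :: "'a::{complex_inner_space, complete_space} set"
  assumes "closed_csubspace L" and "\<And>f. (\<forall>g\<in>L. cinner f g = 0) \<Longrightarrow> cinner f p = 0"
  shows "p \<in> L"
proof -
  obtain m where mL: "m \<in> L" and o: "\<forall>y\<in>L. cinner (p - m) y = 0" using proj[OF assms(1)] by blast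
  have "cinner (p - m) p = 0" using assms(2) o by blast
  moreover have "cinner (p - m) m = 0" using o mL by blast
  ultimately have "cinner (p - m) (p - m) = 0" by (simp add: cinner_diff_right)
  then show ?thesis using mL by simp
qed

lemma closure_csubspace:
  fixes M :: "'a::complex_inner_space set"
  assumes "csubspace M"
  shows "closed_csubspace (closure M)"
proof -
  have "0 \<in> closure M" using assms closure_subset by (auto simp: csubspace_def)
  moreover have "a + b \<in> closure M" if "a \<in> closure M" "b \<in> closure M" for a b
  proof -
    have "\<exists>f. (\<forall>n. f n \<in> M) \<and> f \<longlonglongrightarrow> a" using that(1) by (simp only: closure_sequential)
    then obtain f where f: "\<And>n. f n \<in> M" "f \<longlonglongrightarrow> a" by blast
    have "\<exists>g. (\<forall>n. g n \<in> M) \<and> g \<longlonglongrightarrow> b" using that(2) by (simp only: closure_sequential)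
    then obtain g where g: "\<And>n. g n \<in> M" "g \<longlonglongrightarrow> b" by blast
    have "\<And>n. f n + g n \<in> M" using f g assms by (simp add: csubspace_def)
    moreover have "(\<lambda>n. f n + g n) \<longlonglongrightarrow> a + b" by (intro tendsto_add f g)
    ultimately have "\<exists>h. (\<forall>n. h n \<in> M) \<and> h \<longlonglongrightarrow> a + b" by (intro exI[of _ "\<lambda>n. f n + g n"] conjI allI)
    then show ?thesis by (simp only: closure_sequential)
  qed
  moreover have "c *\<^sub>C a \<in> closure M" if "a \<in> closure M" for a c
  proof -
    have "\<exists>f. (\<forall>n. f n \<in> M) \<and> f \<longlonglongrightarrow> a" using that(1) by (simp only: closure_sequential)
    then obtain f where f: "\<And>n. f n \<in> M" "f \<longlonglongrightarrow> a" by blast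
    have "\<And>n. c *\<^sub>C f n \<in> M" using f assms by (simp add: csubspace_def)
    moreover have "(\<lambda>n. c *\<^sub>C f n) \<longlonglongrightarrow> c *\<^sub>C a" by (intro tendsto_scaleC f)
    ultimately have "\<exists>h. (\<forall>n. h n \<in> M) \<and> h \<longlonglongrightarrow> c *\<^sub>C a" by (intro exI[of _ "\<lambda>n. c *\<^sub>C f n"] conjI allI)
    then show ?thesis by (simp only: closure_sequential)
  qed
  ultimately show ?thesis unfolding closed_csubspace_def csubspace_def using closed_closure[of M] by blast
qed

locale sa =
  fixes D :: "'a::{complex_inner_space, complete_space} set" and A :: "'a \<Rightarrow> 'a"
  assumes sa: "selfadjoint_op D A"
begin

lemma D_csub: "csubspace D" using sa by (simp add: selfadjoint_op_def clinear_op_def)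
lemma D_zero: "0 \<in> D" using D_csub by (simp add: csubspace_def)
lemma D_add: "u \<in> D \<Longrightarrow> v \<in> D \<Longrightarrow> u + v \<in> D" using D_csub by (simp add: csubspace_def)
lemma D_scale: "u \<in> D \<Longrightarrow> c *\<^sub>C u \<in> D" using D_csub by (simp add: csubspace_def)
lemma D_diff: "u \<in> D \<Longrightarrow> v \<in> D \<Longrightarrow> u - v \<in> D"
proof -
  assume "u \<in> D" "v \<in> D"
  moreover have "u - v = u + (-1) *\<^sub>C v" by (simp add: scaleC_minus1)
  ultimately show ?thesis using D_add D_scale by presburger
qed
lemma A_add: "u \<in> D \<Longrightarrow> v \<in> D \<Longrightarrow> A (u + v) = A u + A v"
  using sa by (simp add: selfadjoint_op_def clinear_op_def)
lemma A_scale: "u \<in> D \<Longrightarrow> A (c *\<^sub>C u) = c *\<^sub>C A u"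
  using sa by (simp add: selfadjoint_op_def clinear_op_def)
lemma A_zero: "A 0 = 0" using A_scale[OF D_zero, of 0] by simp
lemma A_diff: "u \<in> D \<Longrightarrow> v \<in> D \<Longrightarrow> A (u - v) = A u - A v"
proof -
  assume u: "u \<in> D" and v: "v \<in> D"
  have "A (u - v) = A (u + (-1) *\<^sub>C v)" by (simp only: scaleC_minus1 diff_conv_add_uminus)
  also have "\<dots> = A u + (-1) *\<^sub>C A v" by (simp only: A_add[OF u D_scale[OF v]] A_scale[OF v])
  also have "\<dots> = A u - A v" by (simp only: scaleC_minus1 diff_conv_add_uminus)
  finally show ?thesis .
qed
lemma D_dense: "closure D = UNIV" using sa by (simp add: selfadjoint_op_def densely_defined_def)

lemma A_adj: "(\<forall>u\<in>D. cinner (A u) v = cinner u w) \<longleftrightarrow> (v \<in> D \<and> w = A v)"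
  using sa by (simp add: selfadjoint_op_def)

lemma A_sym: "u \<in> D \<Longrightarrow> v \<in> D \<Longrightarrow> cinner (A u) v = cinner u (A v)"
  using A_adj[of v "A v"] by blast

lemma A_graph: 
  assumes "\<And>n. X n \<in> D" "X \<longlonglongrightarrow> u" "(\<lambda>n. A (X n)) \<longlonglongrightarrow> w"
  shows "u \<in> D \<and> A u = w"
proof -
  have "cinner (A x) u = cinner x w" if x: "x \<in> D" for x
  proof -
    have L1: "(\<lambda>n. cinner (A x) (X n)) \<longlonglongrightarrow> cinner (A x) u" by (rule tendsto_cinner_right[OF assms(2)])
    have eq: "\<And>n. cinner (A x) (X n) = cinner x (A (X n))"
      using A_sym x assms(1) by blast
    have "(\<lambda>n. cinner x (A (X n))) \<longlonglongrightarrow> cinner x w" by (rule tendsto_cinner_right[OF assms(3)])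
    then have L2: "(\<lambda>n. cinner (A x) (X n)) \<longlonglongrightarrow> cinner x w" by (simp only: eq)
    show ?thesis using LIMSEQ_unique[OF L1 L2] .
  qed
  then have "\<forall>x\<in>D. cinner (A x) u = cinner x w" by blast
  then have "u \<in> D \<and> w = A u" by (simp only: A_adj)
  then show ?thesis by auto
qed

lemma norm_id:
  assumes u: "u \<in> D" and c: "Re c = 0"
  shows "(norm (A u - c *\<^sub>C u))^2 = (norm (A u))^2 + (cmod c)^2 * (norm u)^2"
proof -
  have s: "cinner u (A u) = cinner (A u) u" using A_sym[OF u u] by simp
  have cc: "cnj c + c = 0" using c by (simp add: complex_eq_iff)
  have "cinner (A u - c *\<^sub>C u) (A u - c *\<^sub>C u)
      = cinner (A u) (A u) - (cnj c + c) * cinner (A u) u + (c * cnj c) * cinner u u"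
    by (simp add: cinner_simps s algebra_simps)
  also have "\<dots> = cinner (A u) (A u) + (c * cnj c) * cinner u u" by (simp add: cc)
  finally have E: "cinner (A u - c *\<^sub>C u) (A u - c *\<^sub>C u) = cinner (A u) (A u) + (c * cnj c) * cinner u u" .
  have "complex_of_real ((norm (A u - c *\<^sub>C u))^2) = complex_of_real ((norm (A u))^2 + (cmod c)^2 * (norm u)^2)"
    using E by (simp only: cinner_self_real complex_norm_square[symmetric] of_real_add of_real_mult)
  then show ?thesis by (simp only: of_real_eq_iff)
qed

lemma norm_bounds:
  assumes u: "u \<in> D" and c: "Re c = 0"
  shows "norm (A u) \<le> norm (A u - c *\<^sub>C u)" "cmod c * norm u \<le> norm (A u - c *\<^sub>C u)"
proof -
  have e: "(norm (A u - c *\<^sub>C u))^2 = (norm (A u))^2 + (cmod c * norm u)^2"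
    using norm_id[OF u c] by (simp add: power_mult_distrib)
  show "norm (A u) \<le> norm (A u - c *\<^sub>C u)"
    by (rule power2_le_imp_le) (use e in auto)
  show "cmod c * norm u \<le> norm (A u - c *\<^sub>C u)"
    by (rule power2_le_imp_le) (use e in auto)
qed

lemma inj_Ac:
  assumes "Re c = 0" "c \<noteq> 0" "u \<in> D" "v \<in> D" "A u - c *\<^sub>C u = A v - c *\<^sub>C v"
  shows "u = v"
proof -
  have "A (u - v) - c *\<^sub>C (u - v) = (A u - c *\<^sub>C u) - (A v - c *\<^sub>C v)"
    by (simp add: A_diff[OF assms(3,4)] scaleC_diff_right algebra_simps)
  then have "A (u - v) - c *\<^sub>C (u - v) = 0" using assms(5) by simp
  then have "cmod c * norm (u - v) \<le> 0" using norm_bounds(2)[OF D_diff[OF assms(3,4)] assms(1)] by simp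
  then show ?thesis using assms(2) by (simp add: mult_le_0_iff)
qed

lemma surj_Ac:
  assumes c: "Re c = 0" "c \<noteq> 0"
  shows "\<exists>u\<in>D. A u - c *\<^sub>C u = f"
proof -
  define S where "S = {A u - c *\<^sub>C u | u. u \<in> D}"
  have cm: "0 < cmod c" using c by simp
  have Ssub: "csubspace S"
    unfolding csubspace_def
  proof (intro conjI ballI allI)
    show "0 \<in> S" unfolding S_def using D_zero A_zero by (auto intro!: exI[of _ 0])
    fix x y assume "x \<in> S" "y \<in> S"
    then obtain u v where "u \<in> D" "v \<in> D" "x = A u - c *\<^sub>C u" "y = A v - c *\<^sub>C v" by (auto simp: S_def)
    then show "x + y \<in> S" unfolding S_def
      by (auto intro!: exI[of _ "u + v"] simp: D_add A_add scaleC_add_right)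
  next
    fix k x assume "x \<in> S"
    then obtain u where "u \<in> D" "x = A u - c *\<^sub>C u" by (auto simp: S_def)
    moreover have "c *\<^sub>C (k *\<^sub>C u) = k *\<^sub>C (c *\<^sub>C u)" by (simp add: scaleC_scaleC mult.commute)
    ultimately show "k *\<^sub>C x \<in> S" unfolding S_def
      by (auto intro!: exI[of _ "k *\<^sub>C u"] simp: D_scale A_scale scaleC_diff_right)
  qed
  have Scl: "closed S"
    unfolding closed_sequential_limits
  proof (intro allI impI, elim conjE)
    fix y l assume yS: "\<forall>n. y n \<in> S" and yl: "y \<longlonglongrightarrow> l"
    have "\<exists>u. u \<in> D \<and> A u - c *\<^sub>C u = y n" for n
    proof -
      have "y n \<in> S" using yS by blast
      then obtain u where "u \<in> D" "y n = A u - c *\<^sub>C u" unfolding S_def by blast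
      then show ?thesis by auto
    qed
    then have "\<forall>n. \<exists>u. u \<in> D \<and> A u - c *\<^sub>C u = y n" by blast
    from choice[OF this] obtain u where uu: "\<forall>n. u n \<in> D \<and> A (u n) - c *\<^sub>C u n = y n" by blast
    then have uD: "\<And>n. u n \<in> D" and uy: "\<And>n. A (u n) - c *\<^sub>C u n = y n" by auto
    have dif: "A (u m - u n) - c *\<^sub>C (u m - u n) = y m - y n" for m n
    proof -
      have "A (u m - u n) - c *\<^sub>C (u m - u n) = (A (u m) - c *\<^sub>C u m) - (A (u n) - c *\<^sub>C u n)"
        by (simp add: A_diff[OF uD uD] scaleC_diff_right algebra_simps)
      then show ?thesis by (simp only: uy)
    qed
    have Cy: "Cauchy y" using yl by (rule LIMSEQ_imp_Cauchy)
    have "Cauchy u"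
    proof (rule CauchyI)
      fix e :: real assume e: "0 < e"
      obtain M where M: "\<forall>m\<ge>M. \<forall>n\<ge>M. norm (y m - y n) < cmod c * e"
        using CauchyD[OF Cy] e cm by (meson mult_pos_pos)
      show "\<exists>M. \<forall>m\<ge>M. \<forall>n\<ge>M. norm (u m - u n) < e"
      proof (intro exI allI impI)
        fix m n assume "M \<le> m" "M \<le> n"
        then have "norm (y m - y n) < cmod c * e" using M by blast
        moreover have "cmod c * norm (u m - u n) \<le> norm (y m - y n)"
          using norm_bounds(2)[OF D_diff[OF uD uD] c(1), of m n] dif[of m n] by simp
        ultimately have "cmod c * norm (u m - u n) < cmod c * e" by linarith
        then show "norm (u m - u n) < e" using cm by simp
      qed
    qed
    then obtain a where ua: "u \<longlonglongrightarrow> a" using Cauchy_convergent_iff convergent_def by blast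
    have "Cauchy (\<lambda>n. A (u n))"
    proof (rule CauchyI)
      fix e :: real assume e: "0 < e"
      obtain M where M: "\<forall>m\<ge>M. \<forall>n\<ge>M. norm (y m - y n) < e"
        using CauchyD[OF Cy e] by blast
      show "\<exists>M. \<forall>m\<ge>M. \<forall>n\<ge>M. norm (A (u m) - A (u n)) < e"
      proof (intro exI allI impI)
        fix m n assume "M \<le> m" "M \<le> n"
        then have "norm (y m - y n) < e" using M by blast
        moreover have "norm (A (u m) - A (u n)) \<le> norm (y m - y n)"
          using norm_bounds(1)[OF D_diff[OF uD uD] c(1), of m n] dif[of m n] A_diff[OF uD uD] by simp
        ultimately show "norm (A (u m) - A (u n)) < e" by linarith
      qed
    qed
    then obtain b where ub: "(\<lambda>n. A (u n)) \<longlonglongrightarrow> b" using Cauchy_convergent_iff convergent_def by blast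
    have ab: "a \<in> D \<and> A a = b" by (rule A_graph[OF uD ua ub])
    have "(\<lambda>n. A (u n) - c *\<^sub>C u n) \<longlonglongrightarrow> b - c *\<^sub>C a"
      by (intro tendsto_diff ub tendsto_scaleC ua)
    then have "y \<longlonglongrightarrow> b - c *\<^sub>C a" using uy by simp
    then have "l = A a - c *\<^sub>C a" using yl ab LIMSEQ_unique by blast
    then show "l \<in> S" using ab by (auto simp: S_def)
  qed
  obtain m where mS: "m \<in> S" and o: "\<forall>y\<in>S. cinner (f - m) y = 0"
    using proj[of S f] Ssub Scl by (auto simp: closed_csubspace_def)
  define x where "x = f - m"
  have "\<forall>u\<in>D. cinner (A u) x = cinner u (cnj c *\<^sub>C x)"
  proof
    fix u assume u: "u \<in> D"
    have "cinner x (A u - c *\<^sub>C u) = 0" using o u by (auto simp: S_def x_def)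
    moreover have "cinner (A u - c *\<^sub>C u) x = cnj (cinner x (A u - c *\<^sub>C u))" by (rule cinner_commute)
    ultimately have "cinner (A u - c *\<^sub>C u) x = 0" by simp
    then show "cinner (A u) x = cinner u (cnj c *\<^sub>C x)" by (simp add: cinner_simps)
  qed
  then have "x \<in> D \<and> cnj c *\<^sub>C x = A x" using A_adj by blast
  then have xD: "x \<in> D" and Ax: "A x = cnj c *\<^sub>C x" by auto
  have "cinner (A x) x = cinner x (A x)" using A_sym[OF xD xD] .
  then have "cnj c * cinner x x = c * cinner x x" by (simp add: Ax cinner_simps)
  then have "(cnj c - c) * cinner x x = 0" by (simp add: algebra_simps)
  moreover have "cnj c - c \<noteq> 0" using c by (simp add: complex_eq_iff)
  ultimately have "x = 0" by simp
  then have "f \<in> S" using mS by (simp add: x_def)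
  then show ?thesis by (auto simp: S_def)
qed

definition R :: "complex \<Rightarrow> 'a \<Rightarrow> 'a" where
  "R c f = (THE x. x \<in> D \<and> A x - c *\<^sub>C x = f)"

lemma R_prop:
  assumes "Re c = 0" "c \<noteq> 0"
  shows "R c f \<in> D \<and> A (R c f) - c *\<^sub>C R c f = f"
proof -
  obtain u where u: "u \<in> D" "A u - c *\<^sub>C u = f" using surj_Ac[OF assms] by blast
  have "\<exists>!x. x \<in> D \<and> A x - c *\<^sub>C x = f"
  proof (rule ex1I[of _ u])
    show "u \<in> D \<and> A u - c *\<^sub>C u = f" using u by simp
    fix x assume "x \<in> D \<and> A x - c *\<^sub>C x = f"
    then show "x = u" using inj_Ac[OF assms, of x u] u by simp
  qed
  then show ?thesis unfolding R_def by (rule theI')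
qed

lemma R_unique:
  assumes "Re c = 0" "c \<noteq> 0" "u \<in> D" "A u - c *\<^sub>C u = f"
  shows "R c f = u"
proof -
  have P: "R c f \<in> D" "A (R c f) - c *\<^sub>C R c f = f" using R_prop[OF assms(1,2)] by auto
  show ?thesis using inj_Ac[OF assms(1,2) P(1) assms(3)] P(2) assms(4) by simp
qed

end

context sa begin

lemma Ri: "R \<i> f \<in> D \<and> A (R \<i> f) - \<i> *\<^sub>C R \<i> f = f"
  by (rule R_prop) simp_all

lemma minus_i_eq: "A x - (- \<i>) *\<^sub>C x = A x + \<i> *\<^sub>C x"
  by (simp only: scaleC_minus_left diff_minus_eq_add)

lemma Rmi: "R (- \<i>) f \<in> D \<and> A (R (- \<i>) f) + \<i> *\<^sub>C R (- \<i>) f = f"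
  using R_prop[of "- \<i>" f] by (simp only: minus_i_eq) simp

lemma R_i_eq: "u \<in> D \<Longrightarrow> R \<i> (A u - \<i> *\<^sub>C u) = u"
  by (rule R_unique) simp_all

lemma R_mi_eq: "u \<in> D \<Longrightarrow> R (- \<i>) (A u + \<i> *\<^sub>C u) = u"
  by (rule R_unique) (simp_all only: minus_i_eq, simp_all)

definition U :: "'a \<Rightarrow> 'a" where "U f = A (R \<i> f) + \<i> *\<^sub>C R \<i> f"
definition V :: "'a \<Rightarrow> 'a" where "V f = A (R (- \<i>) f) - \<i> *\<^sub>C R (- \<i>) f"

lemma cayley_eq: "cayley D A = U"
  by (rule ext) (simp only: cayley_def U_def R_def Let_def)

lemma U_of: "u \<in> D \<Longrightarrow> U (A u - \<i> *\<^sub>C u) = A u + \<i> *\<^sub>C u"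
  by (simp only: U_def R_i_eq)

lemma V_of: "u \<in> D \<Longrightarrow> V (A u + \<i> *\<^sub>C u) = A u - \<i> *\<^sub>C u"
  by (simp only: V_def R_mi_eq)

lemma UV: "U (V g) = g"
proof -
  define u where "u = R (- \<i>) g"
  have u: "u \<in> D" "A u + \<i> *\<^sub>C u = g" using Rmi[of g] by (simp_all add: u_def)
  have "V g = A u - \<i> *\<^sub>C u" using V_of[OF u(1)] u(2) by simp
  then show ?thesis using U_of[OF u(1)] u(2) by simp
qed

lemma VU: "V (U f) = f"
proof -
  define u where "u = R \<i> f"
  have u: "u \<in> D" "A u - \<i> *\<^sub>C u = f" using Ri[of f] by (simp_all add: u_def)
  have "U f = A u + \<i> *\<^sub>C u" using U_of[OF u(1)] u(2) by simp
  then show ?thesis using V_of[OF u(1)] u(2) by simp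
qed

lemma Ri_obtain: obtains a where "a \<in> D" "f = A a - \<i> *\<^sub>C a"
  using Ri[of f] by metis

lemma Rmi_obtain: obtains a where "a \<in> D" "f = A a + \<i> *\<^sub>C a"
  using Rmi[of f] by metis

lemma U_add: "U (f + g) = U f + U g"
proof -
  obtain a where a: "a \<in> D" "f = A a - \<i> *\<^sub>C a" by (rule Ri_obtain)
  obtain b where b: "b \<in> D" "g = A b - \<i> *\<^sub>C b" by (rule Ri_obtain)
  have "f + g = A (a + b) - \<i> *\<^sub>C (a + b)"
    unfolding a(2) b(2) by (simp add: A_add[OF a(1) b(1)] scaleC_add_right algebra_simps)
  then have "U (f + g) = A (a + b) + \<i> *\<^sub>C (a + b)" using U_of[OF D_add[OF a(1) b(1)]] by simp
  also have "\<dots> = U f + U g"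
    unfolding a(2) b(2) U_of[OF a(1)] U_of[OF b(1)] by (simp add: A_add[OF a(1) b(1)] scaleC_add_right algebra_simps)
  finally show ?thesis .
qed

lemma U_scale: "U (k *\<^sub>C f) = k *\<^sub>C U f"
proof -
  obtain a where a: "a \<in> D" "f = A a - \<i> *\<^sub>C a" by (rule Ri_obtain)
  have ik: "\<i> *\<^sub>C (k *\<^sub>C a) = k *\<^sub>C (\<i> *\<^sub>C a)" by (simp only: scaleC_scaleC mult.commute)
  have "k *\<^sub>C f = A (k *\<^sub>C a) - \<i> *\<^sub>C (k *\<^sub>C a)"
    unfolding a(2) by (simp only: A_scale[OF a(1)] ik scaleC_diff_right)
  then have "U (k *\<^sub>C f) = A (k *\<^sub>C a) + \<i> *\<^sub>C (k *\<^sub>C a)" using U_of[OF D_scale[OF a(1)]] by simp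
  also have "\<dots> = k *\<^sub>C U f"
    unfolding a(2) U_of[OF a(1)] by (simp only: A_scale[OF a(1)] ik scaleC_add_right)
  finally show ?thesis .
qed

lemma V_add: "V (f + g) = V f + V g"
proof -
  obtain a where a: "a \<in> D" "f = A a + \<i> *\<^sub>C a" by (rule Rmi_obtain)
  obtain b where b: "b \<in> D" "g = A b + \<i> *\<^sub>C b" by (rule Rmi_obtain)
  have "f + g = A (a + b) + \<i> *\<^sub>C (a + b)"
    unfolding a(2) b(2) by (simp add: A_add[OF a(1) b(1)] scaleC_add_right algebra_simps)
  then have "V (f + g) = A (a + b) - \<i> *\<^sub>C (a + b)" using V_of[OF D_add[OF a(1) b(1)]] by simp
  also have "\<dots> = V f + V g"
    unfolding a(2) b(2) V_of[OF a(1)] V_of[OF b(1)] by (simp add: A_add[OF a(1) b(1)] scaleC_add_right algebra_simps)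
  finally show ?thesis .
qed

lemma V_scale: "V (k *\<^sub>C f) = k *\<^sub>C V f"
proof -
  obtain a where a: "a \<in> D" "f = A a + \<i> *\<^sub>C a" by (rule Rmi_obtain)
  have ik: "\<i> *\<^sub>C (k *\<^sub>C a) = k *\<^sub>C (\<i> *\<^sub>C a)" by (simp only: scaleC_scaleC mult.commute)
  have "k *\<^sub>C f = A (k *\<^sub>C a) + \<i> *\<^sub>C (k *\<^sub>C a)"
    unfolding a(2) by (simp only: A_scale[OF a(1)] ik scaleC_add_right)
  then have "V (k *\<^sub>C f) = A (k *\<^sub>C a) - \<i> *\<^sub>C (k *\<^sub>C a)" using V_of[OF D_scale[OF a(1)]] by simp
  also have "\<dots> = k *\<^sub>C V f"
    unfolding a(2) V_of[OF a(1)] by (simp only: A_scale[OF a(1)] ik scaleC_diff_right)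
  finally show ?thesis .
qed

lemma U_diff: "U (f - g) = U f - U g"
proof -
  have "U (f - g) = U (f + (-1) *\<^sub>C g)" by (simp only: scaleC_minus1 diff_conv_add_uminus)
  also have "\<dots> = U f + (-1) *\<^sub>C U g" by (simp only: U_add U_scale)
  finally show ?thesis by (simp only: scaleC_minus1 diff_conv_add_uminus)
qed

lemma V_diff: "V (f - g) = V f - V g"
proof -
  have "V (f - g) = V (f + (-1) *\<^sub>C g)" by (simp only: scaleC_minus1 diff_conv_add_uminus)
  also have "\<dots> = V f + (-1) *\<^sub>C V g" by (simp only: V_add V_scale)
  finally show ?thesis by (simp only: scaleC_minus1 diff_conv_add_uminus)
qed

lemma U_zero: "U 0 = 0" using U_scale[of 0 0] by simp
lemma V_zero: "V 0 = 0" using V_scale[of 0 0] by simp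

lemma iso_core:
  assumes a: "a \<in> D" and b: "b \<in> D"
  shows "cinner (A a + \<i> *\<^sub>C a) (A b + \<i> *\<^sub>C b) = cinner (A a - \<i> *\<^sub>C a) (A b - \<i> *\<^sub>C b)"
proof -
  have s: "cinner (A a) b = cinner a (A b)" by (rule A_sym[OF a b])
  show ?thesis by (simp add: cinner_simps s algebra_simps)
qed

lemma U_iso: "cinner (U f) (U g) = cinner f g"
proof -
  obtain a where a: "a \<in> D" "f = A a - \<i> *\<^sub>C a" by (rule Ri_obtain)
  obtain b where b: "b \<in> D" "g = A b - \<i> *\<^sub>C b" by (rule Ri_obtain)
  show ?thesis unfolding a(2) b(2) U_of[OF a(1)] U_of[OF b(1)] by (rule iso_core[OF a(1) b(1)])
qed

lemma V_iso: "cinner (V f) (V g) = cinner f g"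
  using U_iso[of "V f" "V g"] by (simp only: UV)

lemma U_adj: "cinner (U f) g = cinner f (V g)"
  using U_iso[of f "V g"] by (simp only: UV)

lemma V_adj: "cinner (V f) g = cinner f (U g)"
  using V_iso[of f "U g"] by (simp only: VU)

lemma norm_U: "norm (U f) = norm f"
proof -
  have "(norm (U f))^2 = (norm f)^2" by (simp only: norm_sq_cinner U_iso)
  then show ?thesis by (simp add: power2_eq_iff_nonneg)
qed

lemma norm_V: "norm (V f) = norm f"
proof -
  have "(norm (V f))^2 = (norm f)^2" by (simp only: norm_sq_cinner V_iso)
  then show ?thesis by (simp add: power2_eq_iff_nonneg)
qed

lemma Uk_adj: "cinner ((U ^^ k) a) b = cinner a ((V ^^ k) b)"
proof (induction k arbitrary: a)
  case 0 then show ?case by simp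
next
  case (Suc k)
  have "cinner ((U ^^ Suc k) a) b = cinner ((U ^^ k) (U a)) b" by (simp only: funpow_Suc_right o_apply)
  also have "\<dots> = cinner (U a) ((V ^^ k) b)" by (rule Suc.IH)
  also have "\<dots> = cinner a (V ((V ^^ k) b))" by (rule U_adj)
  also have "\<dots> = cinner a ((V ^^ Suc k) b)" by simp
  finally show ?case .
qed

lemma norm_Uk: "norm ((U ^^ k) a) = norm a"
  by (induction k) (simp_all add: norm_U)

lemma norm_Vk: "norm ((V ^^ k) a) = norm a"
  by (induction k) (simp_all add: norm_V)

end

locale sl = sa D A for D :: "'a::{complex_inner_space, complete_space} set" and A +
  fixes L :: "'a set"
  assumes L: "closed_csubspace L"
begin

lemma L_cs: "csubspace L" using L by (simp add: closed_csubspace_def)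
lemma L_zero: "0 \<in> L" using L_cs by (simp add: csubspace_def)
lemma L_add: "a \<in> L \<Longrightarrow> b \<in> L \<Longrightarrow> a + b \<in> L" using L_cs by (simp add: csubspace_def)
lemma L_scale: "a \<in> L \<Longrightarrow> c *\<^sub>C a \<in> L" using L_cs by (simp add: csubspace_def)
lemma L_scale_iff: "c \<noteq> 0 \<Longrightarrow> c *\<^sub>C a \<in> L \<longleftrightarrow> a \<in> L"
proof
  assume c: "c \<noteq> 0" and "c *\<^sub>C a \<in> L"
  have "inverse c *\<^sub>C (c *\<^sub>C a) \<in> L" by (rule L_scale) fact
  then show "a \<in> L" using c by (simp add: scaleC_scaleC scaleC_one)
qed (rule L_scale)
lemma L_uminus_iff: "- a \<in> L \<longleftrightarrow> a \<in> L"
  using L_scale_iff[of "-1" a] by (simp add: scaleC_minus1)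

abbreviation DS where "DS \<equiv> SL_dom D A L"

lemma DS_mem: "u \<in> DS \<longleftrightarrow> u \<in> D \<and> (\<forall>\<gamma>\<in>L. cinner (A u - \<i> *\<^sub>C u) \<gamma> = 0)"
  by (simp add: SL_dom_def)

lemma key_id:
  assumes u: "u \<in> D"
  shows "cinner (A u - \<i> *\<^sub>C u) ((z - \<i>) *\<^sub>C v - (z + \<i>) *\<^sub>C V v)
       = 2 * \<i> * (cinner (A u) v - cinner u (z *\<^sub>C v))"
proof -
  have h: "cinner (A u - \<i> *\<^sub>C u) (V v) = cinner (A u + \<i> *\<^sub>C u) v"
    by (simp only: U_adj[symmetric] U_of[OF u])
  have "cinner (A u - \<i> *\<^sub>C u) ((z - \<i>) *\<^sub>C v - (z + \<i>) *\<^sub>C V v)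
      = cnj (z - \<i>) * cinner (A u - \<i> *\<^sub>C u) v - cnj (z + \<i>) * cinner (A u + \<i> *\<^sub>C u) v"
    by (simp only: cinner_diff_right cinner_scaleC_right h)
  also have "\<dots> = cnj (z - \<i>) * (cinner (A u) v - \<i> * cinner u v) - cnj (z + \<i>) * (cinner (A u) v + \<i> * cinner u v)"
    by (simp only: cinner_diff_left cinner_add_left cinner_scaleC_left)
  also have "\<dots> = 2 * \<i> * (cinner (A u) v - cnj z * cinner u v)"
    by (simp add: algebra_simps)
  also have "\<dots> = 2 * \<i> * (cinner (A u) v - cinner u (z *\<^sub>C v))"
    by (simp only: cinner_scaleC_right)
  finally show ?thesis .
qed

lemma defect_char: "v \<in> defect_space DS A z \<longleftrightarrow> (z - \<i>) *\<^sub>C v - (z + \<i>) *\<^sub>C V v \<in> L"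
proof
  assume v: "v \<in> defect_space DS A z"
  show "(z - \<i>) *\<^sub>C v - (z + \<i>) *\<^sub>C V v \<in> L"
  proof (rule perp_perp[OF L])
    fix f assume f: "\<forall>g\<in>L. cinner f g = 0"
    define u where "u = R \<i> f"
    have u: "u \<in> D" "A u - \<i> *\<^sub>C u = f" using Ri[of f] by (simp_all add: u_def)
    have "u \<in> DS" using u f by (simp add: DS_mem)
    then have "cinner (A u) v = cinner u (z *\<^sub>C v)" using v by (simp add: defect_space_def)
    then show "cinner f ((z - \<i>) *\<^sub>C v - (z + \<i>) *\<^sub>C V v) = 0"
      using key_id[OF u(1), of z v] u(2) by simp
  qed
next
  assume p: "(z - \<i>) *\<^sub>C v - (z + \<i>) *\<^sub>C V v \<in> L"
  show "v \<in> defect_space DS A z"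
    unfolding defect_space_def
  proof (intro CollectI ballI)
    fix u assume "u \<in> DS"
    then have u: "u \<in> D" and o: "\<forall>\<gamma>\<in>L. cinner (A u - \<i> *\<^sub>C u) \<gamma> = 0" by (simp_all add: DS_mem)
    have "2 * \<i> * (cinner (A u) v - cinner u (z *\<^sub>C v)) = 0"
      using key_id[OF u, of z v] o p by simp
    then show "cinner (A u) v = cinner u (z *\<^sub>C v)" by simp
  qed
qed

lemma defect_i: "v \<in> defect_space DS A \<i> \<longleftrightarrow> V v \<in> L"
proof -
  have eq: "(\<i> - \<i>) *\<^sub>C v - (\<i> + \<i>) *\<^sub>C V v = - ((2 * \<i>) *\<^sub>C V v)" by simp
  have "v \<in> defect_space DS A \<i> \<longleftrightarrow> - ((2 * \<i>) *\<^sub>C V v) \<in> L" by (simp only: defect_char eq)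
  also have "\<dots> \<longleftrightarrow> (2 * \<i>) *\<^sub>C V v \<in> L" by (rule L_uminus_iff)
  also have "\<dots> \<longleftrightarrow> V v \<in> L" by (rule L_scale_iff) simp
  finally show ?thesis .
qed

lemma defect_mi: "v \<in> defect_space DS A (- \<i>) \<longleftrightarrow> v \<in> L"
proof -
  have eq: "(- \<i> - \<i>) *\<^sub>C v - (- \<i> + \<i>) *\<^sub>C V v = (- 2 * \<i>) *\<^sub>C v" by simp
  have "v \<in> defect_space DS A (- \<i>) \<longleftrightarrow> (- 2 * \<i>) *\<^sub>C v \<in> L" by (simp only: defect_char eq)
  also have "\<dots> \<longleftrightarrow> v \<in> L" by (rule L_scale_iff) simp
  finally show ?thesis .
qed

end

context sl begin

definition orthPSO :: bool where
  "orthPSO \<longleftrightarrow> (\<forall>z w. Im z > 0 \<longrightarrow> Im w < 0 \<longrightarrow>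
          (\<forall>x\<in>defect_space DS A z. \<forall>y\<in>defect_space DS A w. cinner x y = 0))"

lemma fix_exists:
  assumes "0 \<le> \<eta>" "\<eta> < 1"
  shows "\<exists>u. u = y + complex_of_real \<eta> *\<^sub>C V u"
proof -
  have "\<exists>!u. y + complex_of_real \<eta> *\<^sub>C V u = u"
  proof (rule banach_fix_type[OF assms], intro allI)
    fix a b
    have "(y + complex_of_real \<eta> *\<^sub>C V a) - (y + complex_of_real \<eta> *\<^sub>C V b) = complex_of_real \<eta> *\<^sub>C V (a - b)"
      by (simp add: V_diff scaleC_diff_right)
    then have "dist (y + complex_of_real \<eta> *\<^sub>C V a) (y + complex_of_real \<eta> *\<^sub>C V b) = norm (complex_of_real \<eta> *\<^sub>C V (a - b))"
      by (simp add: dist_norm)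
    also have "\<dots> = \<eta> * dist a b" using assms by (simp add: norm_scaleC norm_V dist_norm)
    finally show "dist (y + complex_of_real \<eta> *\<^sub>C V a) (y + complex_of_real \<eta> *\<^sub>C V b) \<le> \<eta> * dist a b" by simp
  qed
  then obtain u where "y + complex_of_real \<eta> *\<^sub>C V u = u" by blast
  then show ?thesis by (intro exI[of _ u]) simp
qed

lemma UL_defect: "x \<in> L \<Longrightarrow> U x \<in> defect_space DS A \<i>"
  by (simp add: defect_i VU)

lemma fix_defect:
  assumes y: "y \<in> L" and e: "0 < \<eta>" "\<eta> < 1" and uf: "u = y + complex_of_real \<eta> *\<^sub>C V u"
  shows "u \<in> defect_space DS A (Complex 0 (- ((1 + \<eta>) / (1 - \<eta>))))"
proof -
  define t where "t = (1 + \<eta>) / (1 - \<eta>)"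
  define w where "w = Complex 0 (- t)"
  have e1: "1 - \<eta> \<noteq> 0" using e by simp
  have wi: "w + \<i> = (w - \<i>) * complex_of_real \<eta>"
    using e1 by (simp add: w_def t_def complex_eq_iff field_simps)
  have uy: "u - complex_of_real \<eta> *\<^sub>C V u = y" using uf by (simp add: algebra_simps)
  have "(w - \<i>) *\<^sub>C u - (w + \<i>) *\<^sub>C V u = (w - \<i>) *\<^sub>C (u - complex_of_real \<eta> *\<^sub>C V u)"
    by (simp only: wi scaleC_diff_right scaleC_scaleC)
  also have "\<dots> = (w - \<i>) *\<^sub>C y" by (simp only: uy)
  finally have "(w - \<i>) *\<^sub>C u - (w + \<i>) *\<^sub>C V u \<in> L" using L_scale[OF y] by simp
  then show ?thesis by (simp only: defect_char w_def t_def)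
qed

lemma orth_one_step:
  assumes orth: orthPSO and x: "x \<in> L" and y: "y \<in> L" and e: "0 < \<eta>" "\<eta> < 1"
    and uf: "u = y + complex_of_real \<eta> *\<^sub>C V u"
  shows "cinner (U x) u = 0"
proof -
  have "Im (Complex 0 (- ((1 + \<eta>) / (1 - \<eta>)))) < 0" using e by simp
  moreover have "Im \<i> > 0" by simp
  ultimately show ?thesis using orth UL_defect[OF x] fix_defect[OF y e uf] unfolding orthPSO_def by blast
qed

lemma e_step:
  assumes orth: orthPSO and x: "x \<in> L" and y: "y \<in> L" and e: "0 < \<eta>" "\<eta> < 1"
    and prev: "\<forall>k<n. cinner ((U ^^ Suc k) x) y = 0"
  shows "cmod (cinner ((U ^^ Suc n) x) y) \<le> \<eta> * (norm x * (norm y / (1 - \<eta>)))"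
proof -
  define c where "c = complex_of_real \<eta>"
  obtain u where uf: "u = y + c *\<^sub>C V u" using fix_exists[of \<eta> y] e by (auto simp: c_def)
  define d where "d k = cinner ((U ^^ Suc k) x) u" for k
  have rec: "d k = cinner ((U ^^ Suc k) x) y + c * d (Suc k)" for k
  proof -
    have "d k = cinner ((U ^^ Suc k) x) (y + c *\<^sub>C V u)"
      unfolding d_def using arg_cong[OF uf, of "cinner ((U ^^ Suc k) x)"] .
    also have "\<dots> = cinner ((U ^^ Suc k) x) y + cnj c * cinner (U ((U ^^ Suc k) x)) u"
      by (simp only: cinner_add_right cinner_scaleC_right U_adj)
    also have "\<dots> = cinner ((U ^^ Suc k) x) y + c * d (Suc k)"
      by (simp add: c_def d_def)
    finally show ?thesis .
  qed
  have d0: "d 0 = 0" unfolding d_def using orth_one_step[OF orth x y e, of u] uf by (simp add: c_def)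
  have pw: "j \<le> n \<Longrightarrow> d 0 = c ^ j * d j" for j
  proof (induction j)
    case 0 then show ?case by simp
  next
    case (Suc j)
    then have "j < n" by simp
    then have "d j = c * d (Suc j)" using rec[of j] prev by simp
    then show ?case using Suc by simp
  qed
  have cn: "c \<noteq> 0" using e by (simp add: c_def)
  have "c ^ n * d n = 0" using pw[of n] d0 by simp
  then have dn: "d n = 0" using cn by simp
  have en: "cinner ((U ^^ Suc n) x) y = - c * d (Suc n)" using rec[of n] dn by (simp add: add_eq_0_iff)
  have nu: "norm u \<le> norm y / (1 - \<eta>)"
  proof -
    have "norm u \<le> norm y + norm (c *\<^sub>C V u)" using uf norm_triangle_ineq[of y "c *\<^sub>C V u"] by simp
    also have "norm (c *\<^sub>C V u) = \<eta> * norm u" using e by (simp add: c_def norm_scaleC norm_V)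
    finally have "(1 - \<eta>) * norm u \<le> norm y" by (simp add: algebra_simps)
    then show ?thesis using e by (simp add: field_simps)
  qed
  have "cmod (d (Suc n)) \<le> norm ((U ^^ Suc (Suc n)) x) * norm u"
    unfolding d_def by (rule cinner_cauchy_schwarz)
  also have "\<dots> = norm x * norm u" by (simp only: norm_Uk)
  also have "\<dots> \<le> norm x * (norm y / (1 - \<eta>))" by (rule mult_left_mono[OF nu norm_ge_zero])
  finally have dS: "cmod (d (Suc n)) \<le> norm x * (norm y / (1 - \<eta>))" .
  have "cmod (cinner ((U ^^ Suc n) x) y) = cmod (- c * d (Suc n))" by (simp only: en)
  also have "\<dots> = \<eta> * cmod (d (Suc n))"
    using e by (simp add: c_def norm_mult)
  also have "\<dots> \<le> \<eta> * (norm x * (norm y / (1 - \<eta>)))" by (rule mult_left_mono[OF dS]) (use e in simp)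
  finally show ?thesis .
qed

lemma small_zero:
  fixes a K :: real
  assumes K: "0 \<le> K" and a: "0 \<le> a" and h: "\<And>\<eta>. 0 < \<eta> \<Longrightarrow> \<eta> \<le> 1/2 \<Longrightarrow> a \<le> \<eta> * K"
  shows "a = 0"
proof (rule ccontr)
  assume "a \<noteq> 0"
  then have ap: "0 < a" using a by simp
  define \<eta> where "\<eta> = min (1/2) (a / (2 * (K + 1)))"
  have ep: "0 < \<eta>" using ap K by (simp add: \<eta>_def)
  have Ka: "0 \<le> K * a" using mult_nonneg_nonneg[OF K less_imp_le[OF ap]] .
  have lt: "a / (2 * (K + 1)) * K < a" using ap K by (simp add: field_simps) (use Ka ap in linarith)
  have "\<eta> \<le> 1/2" unfolding \<eta>_def by (rule min.cobounded1)
  then have "a \<le> \<eta> * K" using h[OF ep] by simp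
  also have "\<dots> \<le> a / (2 * (K + 1)) * K" unfolding \<eta>_def by (rule mult_right_mono[OF min.cobounded2 K])
  also note lt
  finally show False by simp
qed

lemma pso_wandering:
  assumes orth: orthPSO
  shows "wandering U L"
proof -
  have E: "cinner ((U ^^ Suc n) x) y = 0" if x: "x \<in> L" and y: "y \<in> L" for x y n
  proof (induction n rule: nat_less_induct)
    case (1 n)
    then have prev: "\<forall>k<n. cinner ((U ^^ Suc k) x) y = 0" by blast
    have "cmod (cinner ((U ^^ Suc n) x) y) \<le> \<eta> * (2 * norm x * norm y)" if "0 < \<eta>" "\<eta> \<le> 1/2" for \<eta>
    proof -
      have "cmod (cinner ((U ^^ Suc n) x) y) \<le> \<eta> * (norm x * (norm y / (1 - \<eta>)))"
        using e_step[OF orth x y that(1) _ prev] that by simp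
      also have "1 / (1 - \<eta>) \<le> 2" using that by (simp add: field_simps)
      then have "norm y * (1 / (1 - \<eta>)) \<le> norm y * 2" by (rule mult_left_mono) simp
      then have "norm y / (1 - \<eta>) \<le> 2 * norm y" by (simp add: mult.commute)
      then have "\<eta> * (norm x * (norm y / (1 - \<eta>))) \<le> \<eta> * (norm x * (2 * norm y))"
        by (rule mult_left_mono[OF mult_left_mono[OF _ norm_ge_zero]]) (use that in simp)
      finally show ?thesis by (simp add: algebra_simps)
    qed
    then have "cmod (cinner ((U ^^ Suc n) x) y) = 0" by (intro small_zero[of "2 * norm x * norm y"]) simp_all
    then show ?case by simp
  qed
  show ?thesis unfolding wandering_def
  proof (intro allI impI ballI)
    fix n :: nat and x y assume "1 \<le> n" "x \<in> L" "y \<in> L"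
    then obtain k where "n = Suc k" by (cases n) auto
    then show "cinner ((U ^^ n) x) y = 0" using E[OF \<open>x \<in> L\<close> \<open>y \<in> L\<close>] by simp
  qed
qed

end

lemma norm_add_orth:
  fixes a b :: "'a::complex_inner_space"
  assumes "cinner a b = 0"
  shows "(norm (a + b))^2 = (norm a)^2 + (norm b)^2"
proof -
  have ab: "inner a b = 0" using assms by (simp add: inner_Re_cinner)
  have "(norm (a + b))^2 = inner (a + b) (a + b)" by (rule power2_norm_eq_inner)
  also have "\<dots> = inner a a + 2 * inner a b + inner b b"
    by (simp add: inner_add_left inner_add_right inner_commute[of b a])
  also have "\<dots> = (norm a)^2 + (norm b)^2" by (simp add: ab power2_norm_eq_inner)
  finally show ?thesis .
qed

lemma geometric_zero:
  fixes f :: "nat \<Rightarrow> complex"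
  assumes rec: "\<And>m. f m = c * f (Suc m)" and c: "cmod c < 1" and bd: "\<And>m. cmod (f m) \<le> K"
  shows "f m = 0"
proof -
  have pw: "f m = c ^ k * f (m + k)" for k
  proof (induction k)
    case 0 then show ?case by simp
  next
    case (Suc k)
    have "f (m + k) = c * f (m + Suc k)" using rec[of "m + k"] by simp
    then show ?case using Suc by simp
  qed
  have le: "cmod (f m) \<le> cmod c ^ k * K" for k
  proof -
    have "cmod (f m) = cmod c ^ k * cmod (f (m + k))" using pw[of k] by (simp add: norm_mult norm_power)
    also have "\<dots> \<le> cmod c ^ k * K" by (rule mult_left_mono[OF bd]) simp
    finally show ?thesis .
  qed
  have "(\<lambda>k. cmod c ^ k * K) \<longlonglongrightarrow> 0 * K"
    by (intro tendsto_mult tendsto_const LIMSEQ_realpow_zero) (use c in simp_all)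
  then have "cmod (f m) \<le> 0 * K" by (rule LIMSEQ_le_const) (use le in blast)
  then show ?thesis by simp
qed

lemma csubspace_cspan: "csubspace (cspan B)"
  unfolding cspan_def csubspace_def by auto

lemma cspan_superset: "B \<subseteq> cspan B"
  unfolding cspan_def by auto

lemma closure_cspan_minimal:
  assumes "closed_csubspace M" "B \<subseteq> M"
  shows "closure (cspan B) \<subseteq> M"
proof -
  have "cspan B \<subseteq> M" using assms unfolding cspan_def closed_csubspace_def by auto
  then show ?thesis using assms(1) closure_minimal unfolding closed_csubspace_def by blast
qed

definition orthonormal :: "'a::complex_inner_space set \<Rightarrow> bool" where
  "orthonormal B \<longleftrightarrow> (\<forall>x\<in>B. cinner x x = 1) \<and> (\<forall>x\<in>B. \<forall>y\<in>B. x \<noteq> y \<longrightarrow> cinner x y = 0)"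

lemma onb_exists:
  fixes M :: "'a::{complex_inner_space, complete_space} set"
  assumes M: "closed_csubspace M"
  shows "\<exists>B. is_onb B M"
proof -
  define F where "F = {B. B \<subseteq> M \<and> orthonormal B}"
  have "\<forall>C\<in>chains F. \<Union>C \<in> F"
  proof
    fix C assume C: "C \<in> chains F"
    then have CF: "C \<subseteq> F" and ch: "\<forall>A\<in>C. \<forall>B\<in>C. A \<subseteq> B \<or> B \<subseteq> A"
      by (auto simp: chains_def chain_subset_def)
    have "\<Union>C \<subseteq> M" using CF by (auto simp: F_def)
    moreover have "orthonormal (\<Union>C)"
      unfolding orthonormal_def
    proof (intro conjI ballI impI)
      fix x assume "x \<in> \<Union>C"
      then show "cinner x x = 1" using CF by (auto simp: F_def orthonormal_def)
    next
      fix x y assume x: "x \<in> \<Union>C" and y: "y \<in> \<Union>C" and xy: "x \<noteq> y"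
      then obtain A B where AB: "A \<in> C" "B \<in> C" "x \<in> A" "y \<in> B" by blast
      then have "A \<subseteq> B \<or> B \<subseteq> A" using ch by blast
      then obtain E where "E \<in> C" "x \<in> E" "y \<in> E" using AB by blast
      then show "cinner x y = 0" using CF xy by (auto simp: F_def orthonormal_def)
    qed
    ultimately show "\<Union>C \<in> F" by (simp add: F_def)
  qed
  then obtain B where BF: "B \<in> F" and mx: "\<forall>X\<in>F. B \<subseteq> X \<longrightarrow> X = B"
    using Zorn_Lemma[of F] by blast
  have BM: "B \<subseteq> M" and onB: "orthonormal B" using BF by (auto simp: F_def)
  define N where "N = closure (cspan B)"
  have NM: "N \<subseteq> M" unfolding N_def by (rule closure_cspan_minimal[OF M BM])
  have Ncs: "closed_csubspace N" unfolding N_def by (rule closure_csubspace[OF csubspace_cspan])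
  have BN: "B \<subseteq> N" unfolding N_def using cspan_superset closure_subset by blast
  have "M \<subseteq> N"
  proof
    fix x assume xM: "x \<in> M"
    show "x \<in> N"
    proof (rule ccontr)
      assume xN: "x \<notin> N"
      obtain m where mN: "m \<in> N" and o: "\<forall>y\<in>N. cinner (x - m) y = 0" using proj[OF Ncs, of x] by blast
      define m' where "m' = x - m"
      have m'0: "m' \<noteq> 0" using xN mN by (auto simp: m'_def)
      have m'M: "m' \<in> M"
      proof -
        have "m \<in> M" using mN NM by blast
        then have "(-1) *\<^sub>C m \<in> M" using M by (simp add: closed_csubspace_def csubspace_def)
        then have "x + (-1) *\<^sub>C m \<in> M" using M xM by (simp add: closed_csubspace_def csubspace_def)
        then show ?thesis by (simp add: m'_def scaleC_minus1)
      qed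
      define e where "e = complex_of_real (1 / norm m') *\<^sub>C m'"
      have eM: "e \<in> M" using m'M M by (simp add: e_def closed_csubspace_def csubspace_def)
      have ne: "norm e = 1" using m'0 by (simp add: e_def norm_scaleC norm_divide)
      have ee: "cinner e e = 1" using ne by (simp add: cinner_self_real)
      have eb: "cinner e b = 0" if "b \<in> B" for b
      proof -
        have "cinner m' b = 0" using o BN that by (simp add: m'_def subset_iff)
        then show ?thesis by (simp add: e_def cinner_scaleC_left)
      qed
      have be: "cinner b e = 0" if "b \<in> B" for b
      proof -
        have "cinner b e = cnj (cinner e b)" by (rule cinner_commute)
        then show ?thesis using eb[OF that] by simp
      qed
      have eB: "e \<notin> B" using eb ee by force
      have "insert e B \<in> F"
        unfolding F_def orthonormal_def
      proof (intro CollectI conjI ballI impI)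
        show "insert e B \<subseteq> M" using eM BM by blast
        fix x assume "x \<in> insert e B"
        then show "cinner x x = 1" using ee onB by (auto simp: orthonormal_def)
      next
        fix x y assume "x \<in> insert e B" "y \<in> insert e B" "x \<noteq> y"
        then show "cinner x y = 0" using eb be onB by (auto simp: orthonormal_def)
      qed
      then have "insert e B = B" using mx by blast
      then show False using eB by blast
    qed
  qed
  then have "closure (cspan B) = M" using NM by (simp add: N_def)
  then have "is_onb B M" using BM onB by (simp add: is_onb_def orthonormal_def)
  then show ?thesis by blast
qed

lemma Im_pos_cmod: "Im z > 0 \<Longrightarrow> cmod (z - \<i>) < cmod (z + \<i>)"
proof -
  assume z: "Im z > 0"
  have "(cmod (z - \<i>))^2 < (cmod (z + \<i>))^2"
    using z by (simp only: cmod_power2) (simp add: power2_eq_square algebra_simps)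
  then show ?thesis by (rule power_less_imp_less_base) simp
qed

lemma Im_neg_cmod: "Im w < 0 \<Longrightarrow> cmod (w + \<i>) < cmod (w - \<i>)"
proof -
  assume w: "Im w < 0"
  have "(cmod (w + \<i>))^2 < (cmod (w - \<i>))^2"
    using w by (simp only: cmod_power2) (simp add: power2_eq_square algebra_simps)
  then show ?thesis by (rule power_less_imp_less_base) simp
qed

lemma preimage_ccs:
  fixes f :: "'a::complex_inner_space \<Rightarrow> 'a"
  assumes M: "closed_csubspace M" and bl: "bounded_linear f"
    and sc: "\<And>c x. f (c *\<^sub>C x) = c *\<^sub>C f x"
  shows "closed_csubspace (f -` M)"
proof -
  have add: "f (x + y) = f x + f y" for x y using bl by (simp add: bounded_linear_def linear_add)
  have f0: "f 0 = 0" using sc[of 0 0] by simp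
  have "csubspace (f -` M)" using M unfolding closed_csubspace_def csubspace_def
    by (simp add: add sc f0)
  moreover have "closed (f -` M)"
    using M by (intro continuous_closed_vimage linear_continuous_at bl) (simp add: closed_csubspace_def)
  ultimately show ?thesis by (simp add: closed_csubspace_def)
qed

context sl begin

lemma bl_U: "bounded_linear U"
proof (rule bounded_linear_intro[where K=1])
  show "U (x + y) = U x + U y" for x y by (rule U_add)
  show "U (r *\<^sub>R x) = r *\<^sub>R U x" for r x by (simp only: scaleR_scaleC U_scale)
  show "norm (U x) \<le> norm x * 1" for x by (simp add: norm_U)
qed

lemma bl_V: "bounded_linear V"
proof (rule bounded_linear_intro[where K=1])
  show "V (x + y) = V x + V y" for x y by (rule V_add)
  show "V (r *\<^sub>R x) = r *\<^sub>R V x" for r x by (simp only: scaleR_scaleC V_scale)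
  show "norm (V x) \<le> norm x * 1" for x by (simp add: norm_V)
qed

lemma DS_sub: "DS \<subseteq> D" by (auto simp: DS_mem)

lemma DS_csub: "csubspace DS"
  unfolding csubspace_def
proof (intro conjI ballI allI)
  show "0 \<in> DS" by (simp add: DS_mem D_zero A_zero)
  fix x y assume x: "x \<in> DS" and y: "y \<in> DS"
  have xD: "x \<in> D" and yD: "y \<in> D" using x y by (auto simp: DS_mem)
  have "A (x + y) - \<i> *\<^sub>C (x + y) = (A x - \<i> *\<^sub>C x) + (A y - \<i> *\<^sub>C y)"
    by (simp add: A_add[OF xD yD] scaleC_add_right algebra_simps)
  then show "x + y \<in> DS" using x y by (simp add: DS_mem D_add cinner_add_left)
next
  fix c x assume x: "x \<in> DS"
  have xD: "x \<in> D" using x by (auto simp: DS_mem)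
  have ic: "\<i> *\<^sub>C (c *\<^sub>C x) = c *\<^sub>C (\<i> *\<^sub>C x)" by (simp only: scaleC_scaleC mult.commute)
  have "A (c *\<^sub>C x) - \<i> *\<^sub>C (c *\<^sub>C x) = c *\<^sub>C (A x - \<i> *\<^sub>C x)"
    by (simp only: A_scale[OF xD] ic scaleC_diff_right)
  then show "c *\<^sub>C x \<in> DS" using x by (simp add: DS_mem D_scale cinner_scaleC_left)
qed

lemma clin_DS: "clinear_op DS A"
  unfolding clinear_op_def using DS_csub DS_sub A_add A_scale by blast

lemma closed_DS: "closed_op DS A"
  unfolding closed_op_def closed_sequential_limits
proof (intro allI impI, elim conjE)
  fix p l assume pG: "\<forall>n. p n \<in> {(u, A u) |u. u \<in> DS}" and pl: "p \<longlonglongrightarrow> l"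
  have "\<exists>u. u \<in> DS \<and> p n = (u, A u)" for n using pG by blast
  then obtain X where X: "\<And>n. X n \<in> DS" and pX: "\<And>n. p n = (X n, A (X n))" by metis
  have XD: "\<And>n. X n \<in> D" using X DS_sub by blast
  have "(\<lambda>n. fst (p n)) \<longlonglongrightarrow> fst l" by (rule tendsto_fst[OF pl])
  then have X1: "X \<longlonglongrightarrow> fst l" by (simp add: pX)
  have "(\<lambda>n. snd (p n)) \<longlonglongrightarrow> snd l" by (rule tendsto_snd[OF pl])
  then have X2: "(\<lambda>n. A (X n)) \<longlonglongrightarrow> snd l" by (simp add: pX)
  have g: "fst l \<in> D \<and> A (fst l) = snd l" by (rule A_graph[OF XD X1 X2])
  have "cinner (A (fst l) - \<i> *\<^sub>C fst l) \<gamma> = 0" if \<gamma>: "\<gamma> \<in> L" for \<gamma>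
  proof -
    have "(\<lambda>n. cinner (A (X n) - \<i> *\<^sub>C X n) \<gamma>) \<longlonglongrightarrow> cinner (snd l - \<i> *\<^sub>C fst l) \<gamma>"
      by (intro tendsto_cinner_left tendsto_diff X2 tendsto_scaleC X1)
    moreover have "\<And>n. cinner (A (X n) - \<i> *\<^sub>C X n) \<gamma> = 0" using X \<gamma> by (simp add: DS_mem)
    ultimately have "cinner (snd l - \<i> *\<^sub>C fst l) \<gamma> = 0" by (simp add: LIMSEQ_const_iff)
    then show ?thesis using g by simp
  qed
  then have "fst l \<in> DS" using g by (simp add: DS_mem)
  then show "l \<in> {(u, A u) |u. u \<in> DS}" using g by (intro CollectI exI[of _ "fst l"]) (simp add: prod_eq_iff)
qed

lemma sym_DS: "\<forall>u\<in>DS. \<forall>v\<in>DS. cinner (A u) v = cinner u (A v)"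
  using A_sym DS_sub by blast

end

context sl begin

lemma perp_DS_zero:
  assumes W: "wandering U L" and hx: "\<forall>u\<in>DS. cinner u x = 0"
  shows "x = 0"
proof -
  have W': "\<And>n x y. 1 \<le> n \<Longrightarrow> x \<in> L \<Longrightarrow> y \<in> L \<Longrightarrow> cinner ((U ^^ n) x) y = 0"
    using W by (simp add: wandering_def)
  define \<gamma> where "\<gamma> = V x - x"
  have \<gamma>L: "\<gamma> \<in> L"
  proof (rule perp_perp[OF L])
    fix f assume f: "\<forall>g\<in>L. cinner f g = 0"
    define u where "u = R \<i> f"
    have uD: "u \<in> D" and uf: "A u - \<i> *\<^sub>C u = f" using Ri[of f] by (simp_all add: u_def)
    have "u \<in> DS" using uD uf f by (simp add: DS_mem)
    then have ux: "cinner u x = 0" using hx by blast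
    have Uf: "U f = A u + \<i> *\<^sub>C u" using U_of[OF uD] unfolding uf .
    have tw: "(2 * \<i>) *\<^sub>C u = \<i> *\<^sub>C u + \<i> *\<^sub>C u" by (simp only: scaleC_add_left[symmetric]) simp
    have "U f - f = (A u + \<i> *\<^sub>C u) - (A u - \<i> *\<^sub>C u)" by (simp only: Uf uf)
    also have "\<dots> = (2 * \<i>) *\<^sub>C u" by (simp only: tw) (simp add: algebra_simps)
    finally have "U f - f = (2 * \<i>) *\<^sub>C u" .
    then have "cinner (U f - f) x = 0" using ux by (simp add: cinner_scaleC_left)
    then have "cinner f (V x) - cinner f x = 0" by (simp add: cinner_diff_left U_adj)
    then show "cinner f \<gamma> = 0" by (simp add: \<gamma>_def cinner_diff_right)
  qed
  define s where "s n = (V ^^ n) x - x" for n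
  have srec: "s (Suc n) = \<gamma> + V (s n)" for n
    by (simp add: s_def \<gamma>_def V_diff)
  have Q: "\<forall>j. 1 \<le> j \<longrightarrow> cinner ((U ^^ j) \<gamma>) (s n) = 0" for n
  proof (induction n)
    case 0 then show ?case by (simp add: s_def)
  next
    case (Suc n)
    show ?case
    proof (intro allI impI)
      fix j :: nat assume j: "1 \<le> j"
      have "cinner ((U ^^ j) \<gamma>) (s (Suc n)) = cinner ((U ^^ j) \<gamma>) \<gamma> + cinner (U ((U ^^ j) \<gamma>)) (s n)"
        by (simp only: srec cinner_add_right U_adj)
      also have "\<dots> = 0 + cinner ((U ^^ Suc j) \<gamma>) (s n)" using W'[OF j \<gamma>L \<gamma>L] by simp
      also have "\<dots> = 0" using Suc.IH[rule_format, of "Suc j"] by simp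
      finally show "cinner ((U ^^ j) \<gamma>) (s (Suc n)) = 0" .
    qed
  qed
  have N: "(norm (s n))^2 = real n * (norm \<gamma>)^2" for n
  proof (induction n)
    case 0 then show ?case by (simp add: s_def)
  next
    case (Suc n)
    have "cinner \<gamma> (V (s n)) = cinner (U \<gamma>) (s n)" by (simp only: U_adj)
    also have "\<dots> = 0" using Q[of n, rule_format, of 1] by simp
    finally have o: "cinner \<gamma> (V (s n)) = 0" .
    have "(norm (s (Suc n)))^2 = (norm \<gamma>)^2 + (norm (V (s n)))^2"
      unfolding srec by (rule norm_add_orth[OF o])
    also have "\<dots> = (norm \<gamma>)^2 + real n * (norm \<gamma>)^2" by (simp add: norm_V Suc.IH)
    finally show ?case by (simp add: algebra_simps)
  qed
  have B: "real n * (norm \<gamma>)^2 \<le> (2 * norm x)^2" for n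
  proof -
    have "norm (s n) \<le> norm ((V ^^ n) x) + norm x" unfolding s_def by (rule norm_triangle_ineq4)
    then have "norm (s n) \<le> 2 * norm x" by (simp add: norm_Vk)
    then have "(norm (s n))^2 \<le> (2 * norm x)^2" by (rule power_mono) simp
    then show ?thesis using N[of n] by simp
  qed
  have \<gamma>0: "\<gamma> = 0"
  proof (rule ccontr)
    assume "\<gamma> \<noteq> 0"
    then have gp: "0 < (norm \<gamma>)^2" by simp
    obtain n where n: "(2 * norm x)^2 / (norm \<gamma>)^2 < real n" using reals_Archimedean2 by blast
    then have "(2 * norm x)^2 < real n * (norm \<gamma>)^2" using gp by (simp add: divide_less_eq)
    then show False using B[of n] by simp
  qed
  then have Vx: "V x = x" by (simp add: \<gamma>_def)
  have Ux: "U x = x" using UV[of x] by (simp add: Vx)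
  define u where "u = R \<i> x"
  have uD: "u \<in> D" and ux: "A u - \<i> *\<^sub>C u = x" using Ri[of x] by (simp_all add: u_def)
  have "U x = A u + \<i> *\<^sub>C u" using U_of[OF uD] unfolding ux .
  then have "A u + \<i> *\<^sub>C u = x" using Ux by simp
  then have "(A u + \<i> *\<^sub>C u) - (A u - \<i> *\<^sub>C u) = 0" using ux by simp
  then have "\<i> *\<^sub>C u + \<i> *\<^sub>C u = 0" by (simp add: algebra_simps)
  then have "(2 * \<i>) *\<^sub>C u = 0" by (simp only: scaleC_add_left[symmetric]) simp
  then have "inverse (2 * \<i>) *\<^sub>C ((2 * \<i>) *\<^sub>C u) = 0" by simp
  then have "u = 0" by (simp add: scaleC_scaleC scaleC_one)
  then show "x = 0" using ux by (simp add: A_zero)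
qed

lemma dense_DS:
  assumes W: "wandering U L"
  shows "densely_defined DS"
proof -
  have cs: "closed_csubspace (closure DS)" by (rule closure_csubspace[OF DS_csub])
  have "h \<in> closure DS" for h
  proof -
    obtain m where m: "m \<in> closure DS" and o: "\<forall>y\<in>closure DS. cinner (h - m) y = 0"
      using proj[OF cs, of h] by blast
    have "\<forall>u\<in>DS. cinner u (h - m) = 0"
    proof
      fix u assume "u \<in> DS"
      then have "cinner (h - m) u = 0" using o closure_subset by blast
      moreover have "cinner u (h - m) = cnj (cinner (h - m) u)" by (rule cinner_commute)
      ultimately show "cinner u (h - m) = 0" by simp
    qed
    then have "h - m = 0" by (rule perp_DS_zero[OF W])
    then show ?thesis using m by simp
  qed
  then show ?thesis by (auto simp: densely_defined_def)
qed

lemma defect_nonzero: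
  assumes "L \<noteq> {0}"
  shows "defect_space DS A \<i> \<noteq> {0}"
proof -
  obtain g where g: "g \<in> L" "g \<noteq> 0" using assms L_zero by blast
  have "U g \<in> defect_space DS A \<i>" by (rule UL_defect[OF g(1)])
  moreover have "U g \<noteq> 0"
  proof
    assume "U g = 0"
    then have "V (U g) = V 0" by simp
    then show False using g(2) by (simp add: VU V_zero)
  qed
  ultimately show ?thesis by blast
qed

lemma onb_part:
  "\<exists>B1 B2. is_onb B1 (defect_space DS A \<i>) \<and> is_onb B2 (defect_space DS A (- \<i>)) \<and> B1 \<approx> B2"
proof -
  obtain B where B: "is_onb B L" using onb_exists[OF L] by blast
  have eqm: "defect_space DS A (- \<i>) = L" by (auto simp: defect_mi)
  have eqi: "defect_space DS A \<i> = V -` L" by (auto simp: defect_i)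
  have BL: "B \<subseteq> L" and Bn: "\<forall>x\<in>B. cinner x x = 1" and Bo: "\<forall>x\<in>B. \<forall>y\<in>B. x \<noteq> y \<longrightarrow> cinner x y = 0"
    and Bc: "closure (cspan B) = L" using B by (auto simp: is_onb_def)
  have injU: "inj_on U B" by (metis VU inj_onI)
  have cV: "closed_csubspace (V -` L)" by (rule preimage_ccs[OF L bl_V V_scale])
  define C where "C = closure (cspan (U ` B))"
  have cC: "closed_csubspace C" unfolding C_def by (rule closure_csubspace[OF csubspace_cspan])
  have UBV: "U ` B \<subseteq> V -` L" using BL by (auto simp: VU)
  have "C \<subseteq> V -` L" unfolding C_def by (rule closure_cspan_minimal[OF cV UBV])
  moreover have "V -` L \<subseteq> C"
  proof
    fix v assume v: "v \<in> V -` L"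
    have cU: "closed_csubspace (U -` C)" by (rule preimage_ccs[OF cC bl_U U_scale])
    have "B \<subseteq> U -` C" unfolding C_def using cspan_superset closure_subset by blast
    then have "L \<subseteq> U -` C" using closure_cspan_minimal[OF cU] Bc by blast
    then have "U (V v) \<in> C" using v by blast
    then show "v \<in> C" by (simp add: UV)
  qed
  ultimately have CV: "C = V -` L" by blast
  have "is_onb (U ` B) (V -` L)"
    unfolding is_onb_def
  proof (intro conjI ballI impI)
    show "U ` B \<subseteq> V -` L" by (rule UBV)
    show "closure (cspan (U ` B)) = V -` L" using CV by (simp add: C_def)
    fix x assume "x \<in> U ` B"
    then obtain a where "a \<in> B" "x = U a" by blast
    then show "cinner x x = 1" using Bn by (simp add: U_iso)
  next
    fix x y assume "x \<in> U ` B" "y \<in> U ` B" "x \<noteq> y"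
    then obtain a b where "a \<in> B" "b \<in> B" "x = U a" "y = U b" "a \<noteq> b" by blast
    then show "cinner x y = 0" using Bo by (simp add: U_iso)
  qed
  moreover have "U ` B \<approx> B" by (rule inj_on_image_eqpoll_self[OF injU])
  ultimately show ?thesis using B eqi eqm by metis
qed

end

context sl begin

lemma orth_part:
  assumes W: "wandering U L"
  shows orthPSO
  unfolding orthPSO_def
proof (intro allI impI ballI)
  have W': "\<And>n x y. 1 \<le> n \<Longrightarrow> x \<in> L \<Longrightarrow> y \<in> L \<Longrightarrow> cinner ((U ^^ n) x) y = 0"
    using W by (simp add: wandering_def)
  fix z w v u
  assume z: "0 < Im z" and w: "Im w < 0"
    and v: "v \<in> defect_space DS A z" and u: "u \<in> defect_space DS A w"
  define p where "p = (z - \<i>) *\<^sub>C v - (z + \<i>) *\<^sub>C V v"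
  have pL: "p \<in> L" using v by (simp add: defect_char p_def)
  have Up: "U p = (z - \<i>) *\<^sub>C U v - (z + \<i>) *\<^sub>C v"
    by (simp only: p_def U_diff U_scale UV)
  have zi: "z + \<i> \<noteq> 0"
  proof
    assume "z + \<i> = 0"
    then have "Im (z + \<i>) = 0" by simp
    then show False using z by simp
  qed
  define \<zeta> where "\<zeta> = (z - \<i>) / (z + \<i>)"
  define x' where "x' = (- 1 / (z + \<i>)) *\<^sub>C p"
  have x'L: "x' \<in> L" unfolding x'_def by (rule L_scale[OF pL])
  have c1: "(- 1 / (z + \<i>)) * (z - \<i>) = - \<zeta>" by (simp add: \<zeta>_def)
  have c2: "(- 1 / (z + \<i>)) * (z + \<i>) = - 1" using zi by simp
  have "U x' = (- 1 / (z + \<i>)) *\<^sub>C U p" by (simp only: x'_def U_scale)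
  also have "\<dots> = ((- 1 / (z + \<i>)) * (z - \<i>)) *\<^sub>C U v - ((- 1 / (z + \<i>)) * (z + \<i>)) *\<^sub>C v"
    by (simp only: Up scaleC_diff_right scaleC_scaleC)
  also have "\<dots> = (- \<zeta>) *\<^sub>C U v - (- 1) *\<^sub>C v" by (simp only: c1 c2)
  finally have Ux': "U x' = - (\<zeta> *\<^sub>C U v) + v" by (simp add: scaleC_minus_left scaleC_minus1 scaleC_one)
  have veq: "v = U x' + \<zeta> *\<^sub>C U v" by (simp add: Ux')
  have z1: "cmod \<zeta> < 1" using Im_pos_cmod[OF z] zi by (simp add: \<zeta>_def norm_divide divide_less_eq)
  define q where "q = (w - \<i>) *\<^sub>C u - (w + \<i>) *\<^sub>C V u"
  have qL: "q \<in> L" using u by (simp add: defect_char q_def)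
  have wi: "w - \<i> \<noteq> 0"
  proof
    assume "w - \<i> = 0"
    then have "Im (w - \<i>) = 0" by simp
    then show False using w by simp
  qed
  define \<eta> where "\<eta> = (w + \<i>) / (w - \<i>)"
  define y' where "y' = (1 / (w - \<i>)) *\<^sub>C q"
  have y'L: "y' \<in> L" unfolding y'_def by (rule L_scale[OF qL])
  have d1: "(1 / (w - \<i>)) * (w - \<i>) = 1" using wi by simp
  have d2: "(1 / (w - \<i>)) * (w + \<i>) = \<eta>" by (simp add: \<eta>_def)
  have "y' = ((1 / (w - \<i>)) * (w - \<i>)) *\<^sub>C u - ((1 / (w - \<i>)) * (w + \<i>)) *\<^sub>C V u"
    by (simp only: y'_def q_def scaleC_diff_right scaleC_scaleC)
  also have "\<dots> = u - \<eta> *\<^sub>C V u" by (simp only: d1 d2 scaleC_one)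
  finally have y'eq: "y' = u - \<eta> *\<^sub>C V u" .
  have ueq: "u = y' + \<eta> *\<^sub>C V u" by (simp add: y'eq)
  have w1: "cmod \<eta> < 1" using Im_neg_cmod[OF w] wi by (simp add: \<eta>_def norm_divide divide_less_eq)
  have a0: "cinner v ((V ^^ m) y) = 0" if y: "y \<in> L" for y m
  proof (rule geometric_zero[where f = "\<lambda>m. cinner v ((V ^^ m) y)" and c = \<zeta> and K = "norm v * norm y"])
    show "cmod \<zeta> < 1" by (rule z1)
    fix m
    show "cmod (cinner v ((V ^^ m) y)) \<le> norm v * norm y"
      using cinner_cauchy_schwarz[of v "(V ^^ m) y"] by (simp add: norm_Vk)
    have "cinner v ((V ^^ m) y) = cinner (U x' + \<zeta> *\<^sub>C U v) ((V ^^ m) y)"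
      using arg_cong[OF veq, of "\<lambda>t. cinner t ((V ^^ m) y)"] .
    also have "\<dots> = cinner ((U ^^ m) (U x')) y + \<zeta> * cinner v (V ((V ^^ m) y))"
      by (simp only: cinner_add_left cinner_scaleC_left U_adj Uk_adj)
    also have "\<dots> = cinner ((U ^^ Suc m) x') y + \<zeta> * cinner v ((V ^^ Suc m) y)"
      by (simp only: funpow_Suc_right[where f=U] funpow.simps(2)[where f=V] o_apply)
    also have "\<dots> = \<zeta> * cinner v ((V ^^ Suc m) y)" using W'[of "Suc m", OF _ x'L y] by simp
    finally show "cinner v ((V ^^ m) y) = \<zeta> * cinner v ((V ^^ Suc m) y)" .
  qed
  have "cinner ((U ^^ k) v) u = 0" for k
  proof (rule geometric_zero[where f = "\<lambda>k. cinner ((U ^^ k) v) u" and c = "cnj \<eta>" and K = "norm v * norm u"])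
    show "cmod (cnj \<eta>) < 1" using w1 by simp
    fix k
    show "cmod (cinner ((U ^^ k) v) u) \<le> norm v * norm u"
      using cinner_cauchy_schwarz[of "(U ^^ k) v" u] by (simp add: norm_Uk)
    have "cinner ((U ^^ k) v) u = cinner ((U ^^ k) v) (y' + \<eta> *\<^sub>C V u)"
      using arg_cong[OF ueq, of "cinner ((U ^^ k) v)"] .
    also have "\<dots> = cinner v ((V ^^ k) y') + cnj \<eta> * cinner (U ((U ^^ k) v)) u"
      by (simp only: cinner_add_right cinner_scaleC_right U_adj Uk_adj)
    also have "\<dots> = cnj \<eta> * cinner ((U ^^ Suc k) v) u" using a0[OF y'L, of k] by simp
    finally show "cinner ((U ^^ k) v) u = cnj \<eta> * cinner ((U ^^ Suc k) v) u" .
  qed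
  from this[of 0] show "cinner v u = 0" by simp
qed

lemma main_equiv:
  assumes L0: "L \<noteq> {0}"
  shows "phillips_symmetric DS A \<longleftrightarrow> wandering U L"
proof
  assume "phillips_symmetric DS A"
  then have orthPSO unfolding phillips_symmetric_def orthPSO_def by blast
  then show "wandering U L" by (rule pso_wandering)
next
  assume W: "wandering U L"
  have "symmetric_op DS A"
    unfolding symmetric_op_def using clin_DS dense_DS[OF W] sym_DS by blast
  then show "phillips_symmetric DS A"
    unfolding phillips_symmetric_def
    using closed_DS defect_nonzero[OF L0] onb_part orth_part[OF W] unfolding orthPSO_def by blast
qed

end

theorem theorem5p2:
  fixes D :: "'a::{complex_inner_space, complete_space} set"
    and A :: "'a \<Rightarrow> 'a"
    and L :: "'a set"
  assumes "separable_type TYPE('a)"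
    and "selfadjoint_op D A"
    and "closed_csubspace L"
    and "L \<noteq> {0}"
  shows "phillips_symmetric (SL_dom D A L) A \<longleftrightarrow> wandering (cayley D A) L"
proof -
  interpret sl D A L using assms(2,3) by unfold_locales
  show ?thesis using main_equiv[OF assms(4)] by (simp only: cayley_eq)
qed

end
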